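(* Let $X$ and $Y$ be completely regular Hausdorff spaces, $\mu\in\mathcal{P}_\sigma(X)$ and $\nu\in\mathcal{P}_\sigma(Y)$ Baire probability measures, and $c\in lsc_{bi}(X\times Y)$ such that $v_{\min}(\mathbf{OP})<+\infty$. Then $\Gamma(\mu,\nu)$ is a nonempty convex compact subset of $\mathcal{M}^1(X\times Y)$ for the weak topology, and the problem $(\mathbf{OP})$ has a solution, i.e. there is $\gamma^*\in\Gamma(\mu,\nu)$ with $\int_{X\times Y}c\,d\gamma^*=v_{\min}(\mathbf{OP})$.
   Context: $C_b(Z)$: real-valued bounded continuous functions on $Z$. $\mathcal{U}(Z)$: algebra generated by zero-sets of $Z$. $\mathcal{M}^1(Z)$: finitely additive $\gamma:\mathcal{U}(Z)\to[0,\infty)$ with $\gamma(Z)=1$ that are regular (for every $A\in\mathcal{U}(Z)$, $\varepsilon>0$ there is a zero-set $F\subseteq A$ with $\gamma(A\setminus F)<\varepsilon$); weak topology: $\gamma_\alpha\to\gamma$ iff $\int f d\gamma_\alpha\to\int fd\gamma$ for all $f\in C_b(Z)$. $lsc_{bi}(Z)$: proper, bounded-below, lower semicontinuous $g:Z\to\mathbb{R}\cup\{+\infty\}$, with $\int g\,d\gamma:=\sup\{\int f d\gamma: f\in C_b(Z), f\le g\}$. $\mathcal{P}_\sigma(X)$: Baire probability measures (countably additive on the $\sigma$-algebra generated by zero-sets). $(\phi\oplus\psi)(x,y):=\phi(x)+\psi(y)$. $\Gamma(\mu,\nu):=\{\gamma\in\mathcal{M}^1(X\times Y): \int_{X\times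 Y}\phi\oplus\psi\,d\gamma=\int_X\phi\,d\mu+\int_Y\psi\,d\nu\ \ \forall\phi\in C_b(X),\psi\in C_b(Y)\}$, and $v_{\min}(\mathbf{OP}):=\inf\{\int_{X\times Y}c\,d\gamma:\gamma\in\Gamma(\mu,\nu)\}$. *)

theory Defs
  imports "HOL-Analysis.Analysis" "HOL-Probability.Probability"
begin

definition Cb :: "('z::topological_space \<Rightarrow> real) set" where
  "Cb = {f. continuous_on UNIV f \<and> bounded (range f)}"

definition zero_sets :: "'z::topological_space set set" where
  "zero_sets = {f -` {0} | f :: 'z \<Rightarrow> real. continuous_on UNIV f}"

definition zs_algebra :: "'z::topological_space set set" where
  "zs_algebra = \<Inter>{A. algebra UNIV A \<and> zero_sets \<subseteq> A}"

text \<open>M^1(Z): regular finitely additive probabilities on U(Z);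
  represented as set functions that vanish outside U(Z).\<close>
definition M1 :: "('z::topological_space set \<Rightarrow> real) set" where
  "M1 = {\<gamma>. (\<forall>A. A \<notin> zs_algebra \<longrightarrow> \<gamma> A = 0)
          \<and> (\<forall>A\<in>zs_algebra. 0 \<le> \<gamma> A)
          \<and> (\<forall>A\<in>zs_algebra. \<forall>B\<in>zs_algebra. A \<inter> B = {} \<longrightarrow> \<gamma> (A \<union> B) = \<gamma> A + \<gamma> B)
          \<and> \<gamma> UNIV = 1
          \<and> (\<forall>A\<in>zs_algebra. \<forall>\<epsilon>>0. \<exists>F\<in>zero_sets. F \<subseteq> A \<and> \<gamma> (A - F) < \<epsilon>)}"

definition fa_integral :: "('z::topological_space set \<Rightarrow> real) \<Rightarrow> ('z \<Rightarrow> real) \<Rightarrow> real" where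
  "fa_integral \<gamma> f = Sup {(\<Sum>A\<in>P. Inf (f ` A) * \<gamma> A) | P.
      finite P \<and> P \<subseteq> zs_algebra \<and> disjoint P \<and> \<Union>P = UNIV \<and> {} \<notin> P}"

definition lsc_bi :: "('z::topological_space \<Rightarrow> ereal) set" where
  "lsc_bi = {g. (\<exists>z. g z \<noteq> \<infinity>) \<and> (\<exists>b::real. \<forall>z. ereal b \<le> g z)
               \<and> (\<forall>t::real. open {z. ereal t < g z})}"

definition lsc_integral :: "('z::topological_space set \<Rightarrow> real) \<Rightarrow> ('z \<Rightarrow> ereal) \<Rightarrow> ereal" where
  "lsc_integral \<gamma> g = (SUP f\<in>{f\<in>Cb. \<forall>z. ereal (f z) \<le> g z}. ereal (fa_integral \<gamma> f))"

definition weak_top :: "('z::topological_space set \<Rightarrow> real) topology" where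
  "weak_top = pullback_topology M1 (\<lambda>\<gamma>. restrict (\<lambda>f. fa_integral \<gamma> f) Cb) (powertop_real Cb)"

definition baire_prob :: "'z::topological_space measure \<Rightarrow> bool" where
  "baire_prob \<mu> \<longleftrightarrow> prob_space \<mu> \<and> space \<mu> = UNIV \<and> sets \<mu> = sigma_sets UNIV zero_sets"

definition plans :: "'a::topological_space measure \<Rightarrow> 'b::topological_space measure
    \<Rightarrow> (('a \<times> 'b) set \<Rightarrow> real) set" where
  "plans \<mu> \<nu> = {\<gamma>\<in>M1. \<forall>\<phi>\<in>Cb. \<forall>\<psi>\<in>Cb.
      fa_integral \<gamma> (\<lambda>(x,y). \<phi> x + \<psi> y) = integral\<^sup>L \<mu> \<phi> + integral\<^sup>L \<nu> \<psi>}"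

definition v_min :: "'a::topological_space measure \<Rightarrow> 'b::topological_space measure
    \<Rightarrow> ('a \<times> 'b \<Rightarrow> ereal) \<Rightarrow> ereal" where
  "v_min \<mu> \<nu> c = (INF \<gamma>\<in>plans \<mu> \<nu>. lsc_integral \<gamma> c)"

end

theory Submission
  imports Defs
begin

lemma Cb_iff: "f \<in> Cb \<longleftrightarrow> continuous_on UNIV f \<and> (\<exists>B. \<forall>x. \<bar>f x\<bar> \<le> B)"
  unfolding Cb_def bounded_real by auto

lemma Cb_bound: "f \<in> Cb \<Longrightarrow> \<exists>B. \<forall>x. \<bar>f x\<bar> \<le> B"
  by (simp add: Cb_iff)

lemma Cb_const[simp]: "(\<lambda>x. c) \<in> Cb"
  unfolding Cb_iff using continuous_on_const by blast

lemma Cb_add: "f \<in> Cb \<Longrightarrow> g \<in> Cb \<Longrightarrow> (\<lambda>x. f x + g x) \<in> Cb"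
proof -
  assume f: "f \<in> Cb" and g: "g \<in> Cb"
  then obtain A B where A: "\<forall>x. \<bar>f x\<bar> \<le> A" and B: "\<forall>x. \<bar>g x\<bar> \<le> B" by (auto simp: Cb_iff)
  have "\<bar>f x + g x\<bar> \<le> A + B" for x using abs_triangle_ineq[of "f x" "g x"] A[rule_format, of x] B[rule_format, of x] by linarith
  then have "\<forall>x. \<bar>f x + g x\<bar> \<le> A + B" by blast
  moreover have "continuous_on UNIV (\<lambda>x. f x + g x)" using f g by (simp add: Cb_iff continuous_on_add)
  ultimately show ?thesis unfolding Cb_iff by blast
qed

lemma Cb_mult: "f \<in> Cb \<Longrightarrow> g \<in> Cb \<Longrightarrow> (\<lambda>x. f x * g x) \<in> Cb"
proof -
  assume f: "f \<in> Cb" and g: "g \<in> Cb"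
  then obtain A B where A: "\<forall>x. \<bar>f x\<bar> \<le> A" and B: "\<forall>x. \<bar>g x\<bar> \<le> B" by (auto simp: Cb_iff)
  have "\<bar>f x * g x\<bar> \<le> A * B" for x
    using A[rule_format, of x] B[rule_format, of x] by (simp add: abs_mult mult_mono')
  then have "\<forall>x. \<bar>f x * g x\<bar> \<le> A * B" by blast
  moreover have "continuous_on UNIV (\<lambda>x. f x * g x)" using f g by (simp add: Cb_iff continuous_on_mult)
  ultimately show ?thesis unfolding Cb_iff by blast
qed

lemma Cb_cmult: "f \<in> Cb \<Longrightarrow> (\<lambda>x. c * f x) \<in> Cb"
  using Cb_mult[of "\<lambda>x. c" f] by simp

lemma Cb_minus: "f \<in> Cb \<Longrightarrow> (\<lambda>x. - f x) \<in> Cb"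
  using Cb_cmult[of f "-1"] by simp

lemma Cb_diff: "f \<in> Cb \<Longrightarrow> g \<in> Cb \<Longrightarrow> (\<lambda>x. f x - g x) \<in> Cb"
  using Cb_add[OF _ Cb_minus] by simp

lemma Cb_max: "f \<in> Cb \<Longrightarrow> g \<in> Cb \<Longrightarrow> (\<lambda>x. max (f x) (g x)) \<in> Cb"
proof -
  assume f: "f \<in> Cb" and g: "g \<in> Cb"
  then obtain A B where A: "\<forall>x. \<bar>f x\<bar> \<le> A" and B: "\<forall>x. \<bar>g x\<bar> \<le> B" by (auto simp: Cb_iff)
  have "\<bar>max (f x) (g x)\<bar> \<le> A + B" for x using A[rule_format, of x] B[rule_format, of x] by linarith
  then have "\<forall>x. \<bar>max (f x) (g x)\<bar> \<le> A + B" by blast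
  moreover have "continuous_on UNIV (\<lambda>x. max (f x) (g x))" using f g by (simp add: Cb_iff continuous_on_max)
  ultimately show ?thesis unfolding Cb_iff by blast
qed

lemma Cb_min: "f \<in> Cb \<Longrightarrow> g \<in> Cb \<Longrightarrow> (\<lambda>x. min (f x) (g x)) \<in> Cb"
proof -
  assume f: "f \<in> Cb" and g: "g \<in> Cb"
  then obtain A B where A: "\<forall>x. \<bar>f x\<bar> \<le> A" and B: "\<forall>x. \<bar>g x\<bar> \<le> B" by (auto simp: Cb_iff)
  have "\<bar>min (f x) (g x)\<bar> \<le> A + B" for x using A[rule_format, of x] B[rule_format, of x] by linarith
  then have "\<forall>x. \<bar>min (f x) (g x)\<bar> \<le> A + B" by blast
  moreover have "continuous_on UNIV (\<lambda>x. min (f x) (g x))" using f g by (simp add: Cb_iff continuous_on_min)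
  ultimately show ?thesis unfolding Cb_iff by blast
qed

lemma Cb_clamp: "f \<in> Cb \<Longrightarrow> (\<lambda>x. min 1 (max 0 (f x))) \<in> Cb"
proof -
  assume "f \<in> Cb"
  then have "(\<lambda>x. max 0 (f x)) \<in> Cb" using Cb_max[of "\<lambda>x. 0" f] by simp
  then show ?thesis using Cb_min[of "\<lambda>x. 1"] by simp
qed

lemma Cb_sum: "finite I \<Longrightarrow> (\<And>i. i \<in> I \<Longrightarrow> f i \<in> Cb) \<Longrightarrow> (\<lambda>x. \<Sum>i\<in>I. f i x) \<in> Cb"
  by (induction I rule: finite_induct) (auto intro!: Cb_add)

lemma zero_setsI: "continuous_on UNIV (f::_\<Rightarrow>real) \<Longrightarrow> f -` {0} \<in> zero_sets"
  unfolding zero_sets_def by auto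

lemma zero_setsE: "F \<in> zero_sets \<Longrightarrow> (\<And>f. continuous_on UNIV f \<Longrightarrow> F = f -` {(0::real)} \<Longrightarrow> P) \<Longrightarrow> P"
  unfolding zero_sets_def by auto

lemma zero_sets_empty[simp]: "{} \<in> zero_sets"
  using zero_setsI[of "\<lambda>x. 1::real"] by simp

lemma zero_sets_UNIV[simp]: "UNIV \<in> zero_sets"
  using zero_setsI[of "\<lambda>x. 0::real"] by simp

lemma zero_sets_Un: "F \<in> zero_sets \<Longrightarrow> G \<in> zero_sets \<Longrightarrow> F \<union> G \<in> zero_sets"
proof -
  assume F: "F \<in> zero_sets" and G: "G \<in> zero_sets"
  obtain f where f: "continuous_on UNIV f" "F = f -` {0::real}" by (rule zero_setsE[OF F])
  obtain g where g: "continuous_on UNIV g" "G = g -` {0::real}" by (rule zero_setsE[OF G])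
  have "F \<union> G = (\<lambda>x. f x * g x) -` {0}" using f g by auto
  moreover have "continuous_on UNIV (\<lambda>x. f x * g x)" using f g by (simp add: continuous_on_mult)
  ultimately show ?thesis by (simp add: zero_setsI)
qed

lemma zero_sets_Int: "F \<in> zero_sets \<Longrightarrow> G \<in> zero_sets \<Longrightarrow> F \<inter> G \<in> zero_sets"
proof -
  assume F: "F \<in> zero_sets" and G: "G \<in> zero_sets"
  obtain f where f: "continuous_on UNIV f" "F = f -` {0::real}" by (rule zero_setsE[OF F])
  obtain g where g: "continuous_on UNIV g" "G = g -` {0::real}" by (rule zero_setsE[OF G])
  have "F \<inter> G = (\<lambda>x. \<bar>f x\<bar> + \<bar>g x\<bar>) -` {0}" using f g by auto
  moreover have "continuous_on UNIV (\<lambda>x. \<bar>f x\<bar> + \<bar>g x\<bar>)" using f g by (intro continuous_intros)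
  ultimately show ?thesis by (simp add: zero_setsI)
qed

lemma zero_sets_ge: "continuous_on UNIV f \<Longrightarrow> {x. (t::real) \<le> f x} \<in> zero_sets"
proof -
  assume f: "continuous_on UNIV f"
  have "{x. t \<le> f x} = (\<lambda>x. max 0 (t - f x)) -` {0}" by auto
  moreover have "continuous_on UNIV (\<lambda>x. max 0 (t - f x))" using f by (intro continuous_intros)
  ultimately show ?thesis by (simp add: zero_setsI)
qed

lemma zero_sets_le: "continuous_on UNIV f \<Longrightarrow> {x. f x \<le> (t::real)} \<in> zero_sets"
  using zero_sets_ge[of "\<lambda>x. - f x" "-t"] by (simp add: continuous_on_minus)

lemma zero_sets_separate:
  assumes "F \<in> zero_sets" "G \<in> zero_sets" "F \<inter> G = {}"
  shows "\<exists>u\<in>Cb. (\<forall>x. 0 \<le> u x \<and> u x \<le> 1) \<and> (\<forall>x\<in>F. u x = 1) \<and> (\<forall>x\<in>G. u x = 0)"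
proof -
  obtain f where f: "continuous_on UNIV f" "F = f -` {0::real}" by (rule zero_setsE[OF assms(1)])
  obtain g where g: "continuous_on UNIV g" "G = g -` {0::real}" by (rule zero_setsE[OF assms(2)])
  have nz: "\<bar>f x\<bar> + \<bar>g x\<bar> \<noteq> 0" for x
  proof
    assume "\<bar>f x\<bar> + \<bar>g x\<bar> = 0"
    then have "x \<in> F \<inter> G" using f g by auto
    with assms(3) show False by auto
  qed
  define u where "u x = \<bar>g x\<bar> / (\<bar>f x\<bar> + \<bar>g x\<bar>)" for x
  have c: "continuous_on UNIV u" unfolding u_def using f g nz
    by (intro continuous_intros) auto
  have b: "0 \<le> u x \<and> u x \<le> 1" for x unfolding u_def using nz[of x]
    by (auto simp: divide_le_eq_1)
  have "u \<in> Cb" using c b by (auto simp: Cb_iff intro!: exI[of _ 1])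
  moreover have "\<forall>x\<in>F. u x = 1"
  proof
    fix x assume "x \<in> F"
    then have "f x = 0" using f by auto
    with nz[of x] have "\<bar>g x\<bar> \<noteq> 0" by simp
    with \<open>f x = 0\<close> show "u x = 1" by (simp add: u_def)
  qed
  moreover have "\<forall>x\<in>G. u x = 0" using g by (auto simp: u_def)
  ultimately show ?thesis using b by blast
qed

lemma algebra_zs: "algebra UNIV (zs_algebra :: 'z::topological_space set set)"
  unfolding algebra_iff_Un
proof (intro conjI ballI)
  show "zs_algebra \<subseteq> Pow UNIV" by simp
  show "{} \<in> zs_algebra" unfolding zs_algebra_def by (auto simp: algebra_iff_Un)
  fix a :: "'z set" assume a: "a \<in> zs_algebra"
  show "UNIV - a \<in> zs_algebra" unfolding zs_algebra_def
  proof
    fix A :: "'z set set" assume "A \<in> {A. algebra UNIV A \<and> zero_sets \<subseteq> A}"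
    then have "algebra UNIV A" "a \<in> A" using a unfolding zs_algebra_def by auto
    then show "UNIV - a \<in> A" by (simp add: algebra_iff_Un)
  qed
  fix b :: "'z set" assume b: "b \<in> zs_algebra"
  show "a \<union> b \<in> zs_algebra" unfolding zs_algebra_def
  proof
    fix A :: "'z set set" assume "A \<in> {A. algebra UNIV A \<and> zero_sets \<subseteq> A}"
    then have "algebra UNIV A" "a \<in> A" "b \<in> A" using a b unfolding zs_algebra_def by auto
    then show "a \<union> b \<in> A" by (simp add: algebra_iff_Un)
  qed
qed

lemma zero_sets_sub_zs: "zero_sets \<subseteq> zs_algebra"
  unfolding zs_algebra_def by auto

lemma zs_minimal: "algebra UNIV D \<Longrightarrow> zero_sets \<subseteq> D \<Longrightarrow> zs_algebra \<subseteq> D"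
  unfolding zs_algebra_def by auto

lemma zs_empty[simp]: "{} \<in> zs_algebra" and zs_UNIV[simp]: "UNIV \<in> zs_algebra"
  using zero_sets_sub_zs zero_sets_empty zero_sets_UNIV by blast+

lemma zs_Un: "A \<in> zs_algebra \<Longrightarrow> B \<in> zs_algebra \<Longrightarrow> A \<union> B \<in> zs_algebra"
  using algebra_zs unfolding algebra_iff_Un by blast

lemma zs_Int: "A \<in> zs_algebra \<Longrightarrow> B \<in> zs_algebra \<Longrightarrow> A \<inter> B \<in> zs_algebra"
  using algebra_zs unfolding algebra_iff_Int by blast

lemma zs_Compl: "A \<in> zs_algebra \<Longrightarrow> - A \<in> zs_algebra"
  using algebra_zs unfolding algebra_iff_Un Compl_eq_Diff_UNIV by blast

lemma zs_Diff: "A \<in> zs_algebra \<Longrightarrow> B \<in> zs_algebra \<Longrightarrow> A - B \<in> zs_algebra"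
  using zs_Int[OF _ zs_Compl] by (simp add: Diff_eq)

lemma zs_zero: "F \<in> zero_sets \<Longrightarrow> F \<in> zs_algebra"
  using zero_sets_sub_zs by blast


definition fa :: "('z::topological_space set \<Rightarrow> real) \<Rightarrow> bool" where
  "fa \<gamma> \<longleftrightarrow> (\<forall>A\<in>zs_algebra. 0 \<le> \<gamma> A)
     \<and> (\<forall>A\<in>zs_algebra. \<forall>B\<in>zs_algebra. A \<inter> B = {} \<longrightarrow> \<gamma> (A \<union> B) = \<gamma> A + \<gamma> B)
     \<and> \<gamma> UNIV = 1"

lemma M1_fa: "\<gamma> \<in> M1 \<Longrightarrow> fa \<gamma>"
  unfolding M1_def fa_def by blast

lemma fa_nonneg: "fa \<gamma> \<Longrightarrow> A \<in> zs_algebra \<Longrightarrow> 0 \<le> \<gamma> A"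
  unfolding fa_def by blast

lemma fa_add: "fa \<gamma> \<Longrightarrow> A \<in> zs_algebra \<Longrightarrow> B \<in> zs_algebra \<Longrightarrow> A \<inter> B = {} \<Longrightarrow> \<gamma> (A \<union> B) = \<gamma> A + \<gamma> B"
  unfolding fa_def by blast

lemma fa_UNIV: "fa \<gamma> \<Longrightarrow> \<gamma> UNIV = 1"
  unfolding fa_def by blast

lemma fa_empty: "fa \<gamma> \<Longrightarrow> \<gamma> {} = 0"
  using fa_add[of \<gamma> "{}" "{}"] by simp

lemma fa_diff: "fa \<gamma> \<Longrightarrow> A \<in> zs_algebra \<Longrightarrow> B \<in> zs_algebra \<Longrightarrow> B \<subseteq> A \<Longrightarrow> \<gamma> (A - B) = \<gamma> A - \<gamma> B"
proof -
  assume g: "fa \<gamma>" and A: "A \<in> zs_algebra" and B: "B \<in> zs_algebra" and sub: "B \<subseteq> A"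
  have "A = B \<union> (A - B)" using sub by blast
  then have "\<gamma> A = \<gamma> B + \<gamma> (A - B)" using fa_add[OF g B zs_Diff[OF A B]] by simp
  then show ?thesis by simp
qed

lemma fa_mono: "fa \<gamma> \<Longrightarrow> A \<in> zs_algebra \<Longrightarrow> B \<in> zs_algebra \<Longrightarrow> B \<subseteq> A \<Longrightarrow> \<gamma> B \<le> \<gamma> A"
  using fa_diff[of \<gamma> A B] fa_nonneg[of \<gamma> "A - B"] zs_Diff[of A B] by simp

lemma fa_le1: "fa \<gamma> \<Longrightarrow> A \<in> zs_algebra \<Longrightarrow> \<gamma> A \<le> 1"
  using fa_mono[of \<gamma> UNIV A] fa_UNIV[of \<gamma>] by simp

lemma zs_UN: "finite I \<Longrightarrow> (\<And>i. i \<in> I \<Longrightarrow> S i \<in> zs_algebra) \<Longrightarrow> (\<Union>i\<in>I. S i) \<in> zs_algebra"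
proof (induction I rule: finite_induct)
  case empty then show ?case by simp
next
  case (insert j I)
  then show ?case using zs_Un[of "S j" "\<Union>i\<in>I. S i"] by simp
qed

lemma fa_sum:
  assumes g: "fa \<gamma>" and fin: "finite I" and S: "\<And>i. i \<in> I \<Longrightarrow> S i \<in> zs_algebra"
    and dis: "\<And>i j. i \<in> I \<Longrightarrow> j \<in> I \<Longrightarrow> i \<noteq> j \<Longrightarrow> S i \<inter> S j = {}"
  shows "\<gamma> (\<Union>i\<in>I. S i) = (\<Sum>i\<in>I. \<gamma> (S i))"
  using fin S dis
proof (induction I rule: finite_induct)
  case empty then show ?case using fa_empty[OF g] by simp
next
  case (insert j I)
  have d: "S j \<inter> (\<Union>i\<in>I. S i) = {}" using insert.prems(2) insert.hyps(2) by fastforce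
  have "\<gamma> (\<Union>i\<in>insert j I. S i) = \<gamma> (S j \<union> (\<Union>i\<in>I. S i))" by simp
  also have "\<dots> = \<gamma> (S j) + \<gamma> (\<Union>i\<in>I. S i)"
    using fa_add[OF g insert.prems(1)[of j] zs_UN[OF insert.hyps(1)] d] insert.prems(1) by simp
  also have "\<gamma> (\<Union>i\<in>I. S i) = (\<Sum>i\<in>I. \<gamma> (S i))"
    using insert.IH insert.prems by simp
  finally show ?case using insert.hyps by simp
qed

definition parts :: "'z::topological_space set set set" where
  "parts = {P. finite P \<and> P \<subseteq> zs_algebra \<and> disjoint P \<and> \<Union>P = UNIV \<and> {} \<notin> P}"

definition LS :: "('z set \<Rightarrow> real) \<Rightarrow> ('z \<Rightarrow> real) \<Rightarrow> 'z set set \<Rightarrow> real" where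
  "LS \<gamma> f P = (\<Sum>A\<in>P. Inf (f ` A) * \<gamma> A)"

definition US :: "('z set \<Rightarrow> real) \<Rightarrow> ('z \<Rightarrow> real) \<Rightarrow> 'z set set \<Rightarrow> real" where
  "US \<gamma> f P = (\<Sum>A\<in>P. Sup (f ` A) * \<gamma> A)"

definition RS :: "('z set \<Rightarrow> real) \<Rightarrow> ('z \<Rightarrow> real) \<Rightarrow> 'z set set \<Rightarrow> real" where
  "RS \<gamma> f P = (\<Sum>A\<in>P. f (SOME x. x \<in> A) * \<gamma> A)"

lemma fa_integral_parts: "fa_integral \<gamma> f = Sup ((\<lambda>P. LS \<gamma> f P) ` parts)"
  unfolding fa_integral_def LS_def parts_def
  by (rule arg_cong[where f=Sup]) blast

lemma parts_UNIV: "{UNIV} \<in> parts"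
  unfolding parts_def disjoint_def by auto

lemma partsD:
  assumes "P \<in> parts"
  shows "finite P" "\<And>A. A \<in> P \<Longrightarrow> A \<in> zs_algebra" "\<And>A B. A \<in> P \<Longrightarrow> B \<in> P \<Longrightarrow> A \<noteq> B \<Longrightarrow> A \<inter> B = {}"
    "\<Union>P = UNIV" "\<And>A. A \<in> P \<Longrightarrow> A \<noteq> {}"
  using assms unfolding parts_def disjoint_def by auto

lemma parts_cover: "P \<in> parts \<Longrightarrow> \<exists>A\<in>P. x \<in> A"
  using partsD(4)[of P] by blast

definition bdd :: "('z \<Rightarrow> real) \<Rightarrow> bool" where
  "bdd f \<longleftrightarrow> (\<exists>B. \<forall>x. \<bar>f x\<bar> \<le> B)"

lemma Cb_bdd: "f \<in> Cb \<Longrightarrow> bdd f"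
  unfolding bdd_def using Cb_bound by blast

lemma bdd_below_img: "bdd f \<Longrightarrow> bdd_below (f ` A)"
  unfolding bdd_def bdd_below_def by (metis abs_le_iff image_iff minus_le_iff)

lemma bdd_above_img: "bdd f \<Longrightarrow> bdd_above (f ` A)"
  unfolding bdd_def bdd_above_def by (metis abs_le_iff image_iff)

lemma Inf_le_pt: "bdd f \<Longrightarrow> x \<in> A \<Longrightarrow> Inf (f ` A) \<le> f x"
  by (rule cInf_lower) (auto intro: bdd_below_img)

lemma pt_le_Sup: "bdd f \<Longrightarrow> x \<in> A \<Longrightarrow> f x \<le> Sup (f ` A)"
  by (rule cSup_upper) (auto intro: bdd_above_img)

lemma fa_part_sum:
  assumes g: "fa \<gamma>" and Q: "Q \<in> parts" and A: "A \<in> zs_algebra"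
  shows "\<gamma> A = (\<Sum>B\<in>Q. \<gamma> (A \<inter> B))"
proof -
  have "\<gamma> (\<Union>B\<in>Q. A \<inter> B) = (\<Sum>B\<in>Q. \<gamma> (A \<inter> B))"
  proof (rule fa_sum[OF g partsD(1)[OF Q]])
    show "\<And>B. B \<in> Q \<Longrightarrow> A \<inter> B \<in> zs_algebra" using A partsD(2)[OF Q] zs_Int by blast
    show "\<And>B C. B \<in> Q \<Longrightarrow> C \<in> Q \<Longrightarrow> B \<noteq> C \<Longrightarrow> A \<inter> B \<inter> (A \<inter> C) = {}"
      using partsD(3)[OF Q] by blast
  qed
  moreover have "(\<Union>B\<in>Q. A \<inter> B) = A" using partsD(4)[OF Q] by blast
  ultimately show ?thesis by simp
qed

lemma LS_le_US:
  assumes g: "fa \<gamma>" and f: "bdd f" and P: "P \<in> parts" and Q: "Q \<in> parts"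
  shows "LS \<gamma> f P \<le> US \<gamma> f Q"
proof -
  have "LS \<gamma> f P = (\<Sum>A\<in>P. \<Sum>B\<in>Q. Inf (f ` A) * \<gamma> (A \<inter> B))"
    unfolding LS_def
    by (rule sum.cong[OF refl]) (simp add: fa_part_sum[OF g Q partsD(2)[OF P]] sum_distrib_left)
  also have "\<dots> \<le> (\<Sum>A\<in>P. \<Sum>B\<in>Q. Sup (f ` B) * \<gamma> (A \<inter> B))"
  proof (intro sum_mono)
    fix A B assume A: "A \<in> P" and B: "B \<in> Q"
    show "Inf (f ` A) * \<gamma> (A \<inter> B) \<le> Sup (f ` B) * \<gamma> (A \<inter> B)"
    proof (cases "A \<inter> B = {}")
      case True then show ?thesis using fa_empty[OF g] by simp
    next
      case False
      then obtain x where x: "x \<in> A" "x \<in> B" by blast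
      have "Inf (f ` A) \<le> Sup (f ` B)"
        using Inf_le_pt[OF f x(1)] pt_le_Sup[OF f x(2)] by linarith
      moreover have "0 \<le> \<gamma> (A \<inter> B)"
        using fa_nonneg[OF g] zs_Int partsD(2)[OF P A] partsD(2)[OF Q B] by blast
      ultimately show ?thesis by (rule mult_right_mono)
    qed
  qed
  also have "\<dots> = (\<Sum>B\<in>Q. \<Sum>A\<in>P. Sup (f ` B) * \<gamma> (B \<inter> A))"
    by (subst sum.swap) (simp add: Int_commute)
  also have "\<dots> = US \<gamma> f Q"
    unfolding US_def
    by (rule sum.cong[OF refl]) (simp add: fa_part_sum[OF g P partsD(2)[OF Q]] sum_distrib_left)
  finally show ?thesis .
qed

lemma LS_le_int:
  assumes g: "fa \<gamma>" and f: "bdd f" and P: "P \<in> parts"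
  shows "LS \<gamma> f P \<le> fa_integral \<gamma> f"
  unfolding fa_integral_parts
proof (rule cSup_upper)
  show "LS \<gamma> f P \<in> (\<lambda>P. LS \<gamma> f P) ` parts" using P by blast
  show "bdd_above ((\<lambda>P. LS \<gamma> f P) ` parts)"
    unfolding bdd_above_def using LS_le_US[OF g f _ parts_UNIV] by blast
qed

lemma int_le_US:
  assumes g: "fa \<gamma>" and f: "bdd f" and Q: "Q \<in> parts"
  shows "fa_integral \<gamma> f \<le> US \<gamma> f Q"
  unfolding fa_integral_parts
proof (rule cSup_least)
  show "(\<lambda>P. LS \<gamma> f P) ` parts \<noteq> {}" using parts_UNIV by blast
  show "\<And>x. x \<in> (\<lambda>P. LS \<gamma> f P) ` parts \<Longrightarrow> x \<le> US \<gamma> f Q"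
    using LS_le_US[OF g f _ Q] by blast
qed


definition osc :: "('z \<Rightarrow> real) \<Rightarrow> 'z set set \<Rightarrow> real \<Rightarrow> bool" where
  "osc f P \<delta> \<longleftrightarrow> (\<forall>A\<in>P. \<forall>x\<in>A. \<forall>y\<in>A. f x \<le> f y + \<delta>)"

lemma Sup_le_Inf_osc:
  assumes f: "bdd f" and A: "A \<noteq> {}" and o: "\<forall>x\<in>A. \<forall>y\<in>A. f x \<le> f y + \<delta>"
  shows "Sup (f ` A) \<le> Inf (f ` A) + \<delta>"
proof -
  have Sy: "Sup (f ` A) \<le> f y + \<delta>" if y: "y \<in> A" for y
    by (rule cSup_least) (use A o y in auto)
  then have "Sup (f ` A) - \<delta> \<le> Inf (f ` A)"
  proof (intro cInf_greatest)
    show "f ` A \<noteq> {}" using A by simp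
    fix z assume "z \<in> f ` A"
    then obtain y where "y \<in> A" "z = f y" by blast
    then show "Sup (f ` A) - \<delta> \<le> z" using Sy[of y] by simp
  qed
  then show ?thesis by simp
qed

lemma SOME_in: "A \<noteq> {} \<Longrightarrow> (SOME x. x \<in> A) \<in> A"
  by (simp add: some_in_eq)

lemma RS_bounds:
  assumes g: "fa \<gamma>" and f: "bdd f" and P: "P \<in> parts"
  shows "LS \<gamma> f P \<le> RS \<gamma> f P" "RS \<gamma> f P \<le> US \<gamma> f P"
proof -
  show "LS \<gamma> f P \<le> RS \<gamma> f P" unfolding LS_def RS_def
  proof (rule sum_mono)
    fix A assume A: "A \<in> P"
    show "Inf (f ` A) * \<gamma> A \<le> f (SOME x. x \<in> A) * \<gamma> A"
      using Inf_le_pt[OF f SOME_in[OF partsD(5)[OF P A]]] fa_nonneg[OF g partsD(2)[OF P A]]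
      by (rule mult_right_mono)
  qed
  show "RS \<gamma> f P \<le> US \<gamma> f P" unfolding US_def RS_def
  proof (rule sum_mono)
    fix A assume A: "A \<in> P"
    show "f (SOME x. x \<in> A) * \<gamma> A \<le> Sup (f ` A) * \<gamma> A"
      using pt_le_Sup[OF f SOME_in[OF partsD(5)[OF P A]]] fa_nonneg[OF g partsD(2)[OF P A]]
      by (rule mult_right_mono)
  qed
qed

lemma fa_sum_parts: "fa \<gamma> \<Longrightarrow> P \<in> parts \<Longrightarrow> (\<Sum>A\<in>P. \<gamma> A) = 1"
  using fa_part_sum[of \<gamma> P UNIV] fa_UNIV[of \<gamma>] by simp

lemma US_LS_osc:
  assumes g: "fa \<gamma>" and f: "bdd f" and P: "P \<in> parts" and o: "osc f P \<delta>"
  shows "US \<gamma> f P \<le> LS \<gamma> f P + \<delta>"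
proof -
  have "US \<gamma> f P \<le> (\<Sum>A\<in>P. (Inf (f ` A) + \<delta>) * \<gamma> A)"
    unfolding US_def
  proof (rule sum_mono)
    fix A assume A: "A \<in> P"
    show "Sup (f ` A) * \<gamma> A \<le> (Inf (f ` A) + \<delta>) * \<gamma> A"
      using Sup_le_Inf_osc[OF f partsD(5)[OF P A]] o A fa_nonneg[OF g partsD(2)[OF P A]]
      unfolding osc_def by (simp add: mult_right_mono)
  qed
  also have "\<dots> = LS \<gamma> f P + \<delta> * (\<Sum>A\<in>P. \<gamma> A)"
    unfolding LS_def by (simp add: distrib_right sum.distrib sum_distrib_left)
  also have "\<dots> = LS \<gamma> f P + \<delta>" using fa_sum_parts[OF g P] by simp
  finally show ?thesis .
qed

lemma int_RS:
  assumes g: "fa \<gamma>" and f: "bdd f" and P: "P \<in> parts" and o: "osc f P \<delta>"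
  shows "\<bar>fa_integral \<gamma> f - RS \<gamma> f P\<bar> \<le> \<delta>"
  using LS_le_int[OF g f P] int_le_US[OF g f P] RS_bounds[OF g f P] US_LS_osc[OF g f P o]
  by linarith

definition refine :: "'z set set \<Rightarrow> 'z set set \<Rightarrow> 'z set set" where
  "refine P Q = (\<lambda>(A,B). A \<inter> B) ` (P \<times> Q) - {{}}"

lemma refine_parts:
  assumes P: "P \<in> parts" and Q: "Q \<in> parts"
  shows "refine P Q \<in> parts"
  unfolding parts_def
proof (intro CollectI conjI)
  show "finite (refine P Q)" unfolding refine_def using partsD(1)[OF P] partsD(1)[OF Q] by simp
  show "refine P Q \<subseteq> zs_algebra"
  proof
    fix C assume "C \<in> refine P Q"
    then obtain A B where AB: "A \<in> P" "B \<in> Q" "C = A \<inter> B" unfolding refine_def by blast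
    show "C \<in> zs_algebra" unfolding AB(3) by (rule zs_Int[OF partsD(2)[OF P AB(1)] partsD(2)[OF Q AB(2)]])
  qed
  show "{} \<notin> refine P Q" unfolding refine_def by blast
  show "\<Union> (refine P Q) = UNIV"
  proof -
    have "x \<in> \<Union> (refine P Q)" for x
    proof -
    obtain A where A: "A \<in> P" "x \<in> A" using parts_cover[OF P] by blast
    obtain B where B: "B \<in> Q" "x \<in> B" using parts_cover[OF Q] by blast
    have "A \<inter> B \<in> refine P Q" unfolding refine_def using A B by blast
    then show "x \<in> \<Union> (refine P Q)" using A B by blast
    qed
    then show ?thesis by blast
  qed
  show "disjoint (refine P Q)"
    unfolding disjoint_def
  proof (intro ballI impI)
    fix C D assume C: "C \<in> refine P Q" and D: "D \<in> refine P Q" and ne: "C \<noteq> D"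
    obtain A B where AB: "A \<in> P" "B \<in> Q" "C = A \<inter> B" using C unfolding refine_def by blast
    obtain A' B' where AB': "A' \<in> P" "B' \<in> Q" "D = A' \<inter> B'" using D unfolding refine_def by blast
    show "C \<inter> D = {}"
    proof (cases "A = A'")
      case True
      then have "B \<noteq> B'" using ne AB AB' by blast
      then show ?thesis using partsD(3)[OF Q AB(2) AB'(2)] AB AB' by blast
    next
      case False
      then show ?thesis using partsD(3)[OF P AB(1) AB'(1)] AB AB' by blast
    qed
  qed
qed

lemma osc_refine1: "osc f P \<delta> \<Longrightarrow> osc f (refine P Q) \<delta>"
  unfolding osc_def
proof (intro ballI)
  fix C x y assume o: "\<forall>A\<in>P. \<forall>x\<in>A. \<forall>y\<in>A. f x \<le> f y + \<delta>" and C: "C \<in> refine P Q" and x: "x \<in> C" and y: "y \<in> C"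
  obtain A B where AB: "A \<in> P" "B \<in> Q" "C = A \<inter> B" using C unfolding refine_def by blast
  show "f x \<le> f y + \<delta>" using o AB x y by blast
qed

lemma osc_refine2: "osc f Q \<delta> \<Longrightarrow> osc f (refine P Q) \<delta>"
  unfolding osc_def
proof (intro ballI)
  fix C x y assume o: "\<forall>A\<in>Q. \<forall>x\<in>A. \<forall>y\<in>A. f x \<le> f y + \<delta>" and C: "C \<in> refine P Q" and x: "x \<in> C" and y: "y \<in> C"
  obtain A B where AB: "A \<in> P" "B \<in> Q" "C = A \<inter> B" using C unfolding refine_def by blast
  show "f x \<le> f y + \<delta>" using o AB x y by blast
qed

lemma slab_part:
  assumes f: "f \<in> Cb" and d: "\<delta> > 0"
  shows "\<exists>P\<in>parts. osc f P \<delta>"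
proof -
  obtain B where B: "\<forall>x. \<bar>f x\<bar> \<le> B" using Cb_bound[OF f] by blast
  have cf: "continuous_on UNIV f" using f by (simp add: Cb_iff)
  obtain N :: nat where N: "2 * B < real N * \<delta>" using reals_Archimedean3[OF d] by blast
  define S where "S k = {x. - B + real k * \<delta> \<le> f x} - {x. - B + real (Suc k) * \<delta> \<le> f x}" for k
  define P where "P = S ` {..<N} - {{}}"
  have Sz: "S k \<in> zs_algebra" for k
    unfolding S_def by (intro zs_Diff zs_zero zero_sets_ge cf)
  have cover: "\<exists>k<N. x \<in> S k" for x
  proof -
    define k where "k = nat \<lfloor>(f x + B) / \<delta>\<rfloor>"
    have fxB: "0 \<le> f x + B" using B[rule_format, of x] by linarith
    then have k0: "0 \<le> \<lfloor>(f x + B) / \<delta>\<rfloor>" using d by simp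
    then have rk: "real k = of_int \<lfloor>(f x + B) / \<delta>\<rfloor>" unfolding k_def by simp
    have "real k \<le> (f x + B) / \<delta>" using rk by linarith
    then have l: "real k * \<delta> \<le> f x + B" using d by (simp add: pos_le_divide_eq)
    have "(f x + B) / \<delta> < real k + 1" using rk by linarith
    then have u: "f x + B < (real k + 1) * \<delta>" using d by (simp add: pos_divide_less_eq)
    have "f x + B \<le> 2 * B" using B[rule_format, of x] by linarith
    then have "real k * \<delta> < real N * \<delta>" using l N by linarith
    then have "k < N" using d by simp
    moreover have "x \<in> S k" unfolding S_def using l u by (simp add: algebra_simps)
    ultimately show ?thesis by blast
  qed
  have dis: "S k \<inter> S j = {}" if "k < j" for k j
  proof -
    have "real (Suc k) * \<delta> \<le> real j * \<delta>" using that d by (simp add: mult_right_mono)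
    then show ?thesis unfolding S_def by auto
  qed
  have "P \<in> parts"
    unfolding parts_def
  proof (intro CollectI conjI)
    show "finite P" unfolding P_def by simp
    show "P \<subseteq> zs_algebra" unfolding P_def using Sz by blast
    show "{} \<notin> P" unfolding P_def by blast
    show "\<Union> P = UNIV" unfolding P_def using cover by blast
    show "disjoint P" unfolding disjoint_def disjnt_def
    proof (intro ballI impI)
      fix C D assume C: "C \<in> P" and D: "D \<in> P" and ne: "C \<noteq> D"
      obtain k j where "C = S k" "D = S j" using C D unfolding P_def by blast
      moreover have "k \<noteq> j" using ne calculation by blast
      ultimately show "C \<inter> D = {}" using dis[of k j] dis[of j k] by (cases "k < j") auto
    qed
  qed
  moreover have "osc f P \<delta>"
    unfolding osc_def P_def S_def by (auto simp: algebra_simps)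
  ultimately show ?thesis by blast
qed

lemma osc_parts_finite:
  assumes "finite Fs" "Fs \<subseteq> Cb" "\<delta> > 0"
  shows "\<exists>P\<in>parts. \<forall>f\<in>Fs. osc f P \<delta>"
  using assms
proof (induction Fs rule: finite_induct)
  case empty then show ?case using parts_UNIV by blast
next
  case (insert g Fs)
  obtain P where P: "P \<in> parts" "\<forall>f\<in>Fs. osc f P \<delta>" using insert by auto
  obtain Q where Q: "Q \<in> parts" "osc g Q \<delta>" using slab_part[of g \<delta>] insert.prems by auto
  show ?case
    using refine_parts[OF P(1) Q(1)] P(2) Q(2) osc_refine1 osc_refine2 by blast
qed


lemma small_zero:
  fixes D C :: real
  assumes "\<And>\<delta>. \<delta> > 0 \<Longrightarrow> \<bar>D\<bar> \<le> \<delta> * C"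
  shows "D = 0"
proof -
  have "\<bar>D\<bar> \<le> 0 + e" if e: "e > 0" for e
  proof -
    define \<delta> where "\<delta> = e / (\<bar>C\<bar> + 1)"
    have dp: "\<delta> > 0" unfolding \<delta>_def using e by (simp add: add_pos_nonneg)
    have "\<delta> * C \<le> \<delta> * (\<bar>C\<bar> + 1)" using dp by (intro mult_left_mono) auto
    also have "\<dots> = e" unfolding \<delta>_def by (simp add: add_pos_nonneg)
    finally show ?thesis using assms[OF dp] by simp
  qed
  then have "\<bar>D\<bar> \<le> 0" by (rule field_le_epsilon)
  then show ?thesis by simp
qed

lemma RS_lin: "RS \<gamma> (\<lambda>x. a * f x + b * g x) P = a * RS \<gamma> f P + b * RS \<gamma> g P"
  unfolding RS_def by (simp add: sum_distrib_left sum.distrib algebra_simps)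

lemma int_lin:
  assumes g: "fa \<gamma>" and f1: "f \<in> Cb" and f2: "h \<in> Cb"
  shows "fa_integral \<gamma> (\<lambda>x. a * f x + b * h x) = a * fa_integral \<gamma> f + b * fa_integral \<gamma> h"
proof -
  define k where "k = (\<lambda>x. a * f x + b * h x)"
  have kC: "k \<in> Cb" unfolding k_def using Cb_add[OF Cb_cmult[OF f1] Cb_cmult[OF f2]] by simp
  have "fa_integral \<gamma> k - (a * fa_integral \<gamma> f + b * fa_integral \<gamma> h) = 0"
  proof (rule small_zero)
    fix \<delta> :: real assume d: "\<delta> > 0"
    obtain P where P: "P \<in> parts" "\<forall>u\<in>{f,h,k}. osc u P \<delta>"
      using osc_parts_finite[of "{f,h,k}" \<delta>] f1 f2 kC d by auto
    have e1: "\<bar>fa_integral \<gamma> k - RS \<gamma> k P\<bar> \<le> \<delta>" using int_RS[OF g Cb_bdd[OF kC] P(1)] P(2) by simp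
    have e2: "\<bar>fa_integral \<gamma> f - RS \<gamma> f P\<bar> \<le> \<delta>" using int_RS[OF g Cb_bdd[OF f1] P(1)] P(2) by simp
    have e3: "\<bar>fa_integral \<gamma> h - RS \<gamma> h P\<bar> \<le> \<delta>" using int_RS[OF g Cb_bdd[OF f2] P(1)] P(2) by simp
    have r: "RS \<gamma> k P = a * RS \<gamma> f P + b * RS \<gamma> h P" unfolding k_def by (rule RS_lin)
    have "\<bar>a * (fa_integral \<gamma> f - RS \<gamma> f P)\<bar> \<le> \<bar>a\<bar> * \<delta>"
      using e2 by (simp add: abs_mult mult_left_mono)
    moreover have "\<bar>b * (fa_integral \<gamma> h - RS \<gamma> h P)\<bar> \<le> \<bar>b\<bar> * \<delta>"
      using e3 by (simp add: abs_mult mult_left_mono)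
    ultimately have "\<bar>fa_integral \<gamma> k - (a * fa_integral \<gamma> f + b * fa_integral \<gamma> h)\<bar> \<le> \<delta> + \<bar>a\<bar> * \<delta> + \<bar>b\<bar> * \<delta>"
      using e1 r by (simp add: algebra_simps abs_le_iff) linarith?
    then show "\<bar>fa_integral \<gamma> k - (a * fa_integral \<gamma> f + b * fa_integral \<gamma> h)\<bar> \<le> \<delta> * (1 + \<bar>a\<bar> + \<bar>b\<bar>)"
      by (simp add: algebra_simps)
  qed
  then show ?thesis unfolding k_def by simp
qed

lemma fa_comb:
  fixes \<gamma>1 \<gamma>2 :: "'z::topological_space set \<Rightarrow> real"
  assumes g1: "fa \<gamma>1" and g2: "fa \<gamma>2" and t: "0 \<le> t" "t \<le> 1"
  shows "fa (\<lambda>A. t * \<gamma>1 A + (1 - t) * \<gamma>2 A)"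
  unfolding fa_def
proof (intro conjI ballI impI)
  fix A :: "'z set" assume A: "A \<in> zs_algebra"
  show "0 \<le> t * \<gamma>1 A + (1 - t) * \<gamma>2 A"
    using fa_nonneg[OF g1 A] fa_nonneg[OF g2 A] t by simp
  fix B :: "'z set" assume B: "B \<in> zs_algebra" and d: "A \<inter> B = {}"
  show "t * \<gamma>1 (A \<union> B) + (1 - t) * \<gamma>2 (A \<union> B) = t * \<gamma>1 A + (1 - t) * \<gamma>2 A + (t * \<gamma>1 B + (1 - t) * \<gamma>2 B)"
    using fa_add[OF g1 A B d] fa_add[OF g2 A B d] by (simp add: algebra_simps)
next
  show "t * \<gamma>1 UNIV + (1 - t) * \<gamma>2 UNIV = 1" using fa_UNIV[OF g1] fa_UNIV[OF g2] by simp
qed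

lemma int_comb:
  fixes \<gamma>1 \<gamma>2 :: "'z::topological_space set \<Rightarrow> real"
  assumes g1: "fa \<gamma>1" and g2: "fa \<gamma>2" and t: "0 \<le> t" "t \<le> 1" and f: "f \<in> Cb"
  shows "fa_integral (\<lambda>A. t * \<gamma>1 A + (1 - t) * \<gamma>2 A) f = t * fa_integral \<gamma>1 f + (1 - t) * fa_integral \<gamma>2 f"
proof -
  define \<gamma> where "\<gamma> = (\<lambda>A. t * \<gamma>1 A + (1 - t) * \<gamma>2 A)"
  have g: "fa \<gamma>" unfolding \<gamma>_def by (rule fa_comb[OF g1 g2 t])
  have "fa_integral \<gamma> f - (t * fa_integral \<gamma>1 f + (1 - t) * fa_integral \<gamma>2 f) = 0"
  proof (rule small_zero)
    fix \<delta> :: real assume d: "\<delta> > 0"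
    obtain P where P: "P \<in> parts" "osc f P \<delta>" using slab_part[OF f d] by blast
    have e1: "\<bar>fa_integral \<gamma> f - RS \<gamma> f P\<bar> \<le> \<delta>" using int_RS[OF g Cb_bdd[OF f] P] .
    have e2: "\<bar>fa_integral \<gamma>1 f - RS \<gamma>1 f P\<bar> \<le> \<delta>" using int_RS[OF g1 Cb_bdd[OF f] P] .
    have e3: "\<bar>fa_integral \<gamma>2 f - RS \<gamma>2 f P\<bar> \<le> \<delta>" using int_RS[OF g2 Cb_bdd[OF f] P] .
    have "RS \<gamma> f P = (\<Sum>A\<in>P. t * (f (SOME x. x\<in>A) * \<gamma>1 A) + (1 - t) * (f (SOME x. x\<in>A) * \<gamma>2 A))"
      unfolding RS_def \<gamma>_def by (rule sum.cong) (simp_all add: algebra_simps)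
    also have "\<dots> = t * RS \<gamma>1 f P + (1 - t) * RS \<gamma>2 f P"
      unfolding RS_def by (simp add: sum.distrib sum_distrib_left)
    finally have r: "RS \<gamma> f P = t * RS \<gamma>1 f P + (1 - t) * RS \<gamma>2 f P" .
    have "\<bar>t * (fa_integral \<gamma>1 f - RS \<gamma>1 f P)\<bar> \<le> t * \<delta>"
      using e2 t by (simp add: abs_mult mult_left_mono)
    moreover have "\<bar>(1 - t) * (fa_integral \<gamma>2 f - RS \<gamma>2 f P)\<bar> \<le> (1 - t) * \<delta>"
      using e3 t by (simp add: abs_mult mult_left_mono)
    ultimately have "\<bar>fa_integral \<gamma> f - (t * fa_integral \<gamma>1 f + (1 - t) * fa_integral \<gamma>2 f)\<bar> \<le> \<delta> + t * \<delta> + (1 - t) * \<delta>"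
      using e1 r by (simp add: algebra_simps abs_le_iff) linarith?
    then show "\<bar>fa_integral \<gamma> f - (t * fa_integral \<gamma>1 f + (1 - t) * fa_integral \<gamma>2 f)\<bar> \<le> \<delta> * 2"
      by (simp add: algebra_simps)
  qed
  then show ?thesis unfolding \<gamma>_def by simp
qed

lemma int_const: "fa \<gamma> \<Longrightarrow> fa_integral \<gamma> (\<lambda>x. c) = c"
proof -
  assume g: "fa \<gamma>"
  have b: "bdd (\<lambda>x::'a. c)" unfolding bdd_def by blast
  have "LS \<gamma> (\<lambda>x. c) {UNIV} = c" "US \<gamma> (\<lambda>x. c) {UNIV} = c"
    unfolding LS_def US_def using fa_UNIV[OF g] by simp_all
  then show ?thesis using LS_le_int[OF g b parts_UNIV] int_le_US[OF g b parts_UNIV] by simp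
qed

lemma int_bound:
  assumes g: "fa \<gamma>" and B: "\<forall>x. \<bar>f x\<bar> \<le> B"
  shows "\<bar>fa_integral \<gamma> f\<bar> \<le> B"
proof -
  have b: "bdd f" unfolding bdd_def using B by blast
  have "- B \<le> Inf (range f)"
  proof (rule cInf_greatest)
    fix y assume "y \<in> range f"
    then obtain x where "y = f x" by blast
    then show "- B \<le> y" using B[rule_format, of x] by linarith
  qed simp
  then have l: "- B \<le> LS \<gamma> f {UNIV}" unfolding LS_def using fa_UNIV[OF g] by simp
  have "Sup (range f) \<le> B"
  proof (rule cSup_least)
    fix y assume "y \<in> range f"
    then obtain x where "y = f x" by blast
    then show "y \<le> B" using B[rule_format, of x] by linarith
  qed simp
  then have u: "US \<gamma> f {UNIV} \<le> B" unfolding US_def using fa_UNIV[OF g] by simp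
  show ?thesis using l u LS_le_int[OF g b parts_UNIV] int_le_US[OF g b parts_UNIV] by linarith
qed

lemma int_nonneg:
  assumes g: "fa \<gamma>" and b: "bdd f" and nn: "\<forall>x. 0 \<le> f x"
  shows "0 \<le> fa_integral \<gamma> f"
proof -
  have "0 \<le> Inf (range f)"
    by (rule cInf_greatest) (use nn in auto)
  then have l: "0 \<le> LS \<gamma> f {UNIV}" unfolding LS_def using fa_UNIV[OF g] by simp
  show ?thesis using l LS_le_int[OF g b parts_UNIV] by linarith
qed

lemma int_mono:
  assumes g: "fa \<gamma>" and f: "f \<in> Cb" and h: "h \<in> Cb" and le: "\<forall>x. f x \<le> h x"
  shows "fa_integral \<gamma> f \<le> fa_integral \<gamma> h"
proof -
  have d: "(\<lambda>x. 1 * h x + (-1) * f x) \<in> Cb" using Cb_diff[OF h f] by simp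
  have "0 \<le> fa_integral \<gamma> (\<lambda>x. 1 * h x + (-1) * f x)"
    by (rule int_nonneg[OF g Cb_bdd[OF d]]) (use le in auto)
  also have "\<dots> = fa_integral \<gamma> h - fa_integral \<gamma> f" using int_lin[OF g h f, of 1 "-1"] by simp
  finally show ?thesis by simp
qed

lemma int_lower_set:
  assumes g: "fa \<gamma>" and b: "bdd h" and nn: "\<forall>x. 0 \<le> h x" and F: "F \<in> zs_algebra"
    and one: "\<forall>x\<in>F. 1 \<le> h x"
  shows "\<gamma> F \<le> fa_integral \<gamma> h"
proof (cases "F = {}")
  case True then show ?thesis using fa_empty[OF g] int_nonneg[OF g b nn] by simp
next
  case Fne: False
  show ?thesis
  proof (cases "F = UNIV")
    case True
    have "1 \<le> Inf (range h)" by (rule cInf_greatest) (use one True in auto)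
    then have "1 \<le> LS \<gamma> h {UNIV}" unfolding LS_def using fa_UNIV[OF g] by simp
    then show ?thesis using True fa_UNIV[OF g] LS_le_int[OF g b parts_UNIV] by simp
  next
    case False
    have P: "{F, -F} \<in> parts" unfolding parts_def disjoint_def
      using F zs_Compl[OF F] Fne False by auto
    have FF: "F \<noteq> -F" using Fne by auto
    have "1 \<le> Inf (h ` F)" by (rule cInf_greatest) (use one Fne in auto)
    moreover have "0 \<le> Inf (h ` (-F))" by (rule cInf_greatest) (use nn False in auto)
    moreover note fa_nonneg[OF g F] fa_nonneg[OF g zs_Compl[OF F]]
    ultimately have a1: "\<gamma> F \<le> Inf (h ` F) * \<gamma> F" and a2: "0 \<le> Inf (h ` (-F)) * \<gamma> (-F)"
      using mult_right_mono[of 1 "Inf (h ` F)" "\<gamma> F"] by simp_all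
    have "LS \<gamma> h {F, -F} = Inf (h ` F) * \<gamma> F + Inf (h ` (-F)) * \<gamma> (-F)"
      unfolding LS_def using FF by simp
    then have "\<gamma> F \<le> LS \<gamma> h {F, -F}" using a1 a2 by linarith
    then show ?thesis using LS_le_int[OF g b P] by linarith
  qed
qed


lemma eps3_le:
  fixes x y :: real
  assumes "\<And>e. 0 < e \<Longrightarrow> e < 1 \<Longrightarrow> x \<le> y + 3 * e"
  shows "x \<le> y"
proof (rule field_le_epsilon)
  fix e :: real assume e: "0 < e"
  define e' where "e' = min (e / 3) (1/2)"
  have "0 < e'" "e' < 1" unfolding e'_def using e by auto
  then have "x \<le> y + 3 * e'" by (rule assms)
  moreover have "3 * e' \<le> e" unfolding e'_def by linarith
  ultimately show "x \<le> y + e" by linarith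
qed

locale posfun =
  fixes L :: "('z::topological_space \<Rightarrow> real) \<Rightarrow> real"
  assumes L_lin: "f \<in> Cb \<Longrightarrow> g \<in> Cb \<Longrightarrow> L (\<lambda>x. a * f x + b * g x) = a * L f + b * L g"
    and L_pos: "f \<in> Cb \<Longrightarrow> \<forall>x. 0 \<le> f x \<Longrightarrow> 0 \<le> L f"
    and L_one: "L (\<lambda>x. 1) = 1"
begin

lemma L_add: "f \<in> Cb \<Longrightarrow> g \<in> Cb \<Longrightarrow> L (\<lambda>x. f x + g x) = L f + L g"
  using L_lin[of f g 1 1] by simp

lemma L_cmult: "f \<in> Cb \<Longrightarrow> L (\<lambda>x. c * f x) = c * L f"
  using L_lin[of f f c 0] by simp

lemma L_mono: "f \<in> Cb \<Longrightarrow> g \<in> Cb \<Longrightarrow> \<forall>x. f x \<le> g x \<Longrightarrow> L f \<le> L g"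
proof -
  assume f: "f \<in> Cb" and g: "g \<in> Cb" and le: "\<forall>x. f x \<le> g x"
  have "0 \<le> L (\<lambda>x. 1 * g x + (-1) * f x)"
    by (rule L_pos) (use Cb_diff[OF g f] le in auto)
  then show ?thesis using L_lin[OF g f, of 1 "-1"] by simp
qed

lemma L_sum: "finite I \<Longrightarrow> (\<And>i. i \<in> I \<Longrightarrow> f i \<in> Cb) \<Longrightarrow> L (\<lambda>x. \<Sum>i\<in>I. f i x) = (\<Sum>i\<in>I. L (f i))"
proof (induction I rule: finite_induct)
  case empty
  then show ?case using L_cmult[of "\<lambda>x. 1" 0] by simp
next
  case (insert j I)
  have "L (\<lambda>x. \<Sum>i\<in>insert j I. f i x) = L (\<lambda>x. f j x + (\<Sum>i\<in>I. f i x))"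
    using insert.hyps by simp
  also have "\<dots> = L (f j) + L (\<lambda>x. \<Sum>i\<in>I. f i x)"
    by (rule L_add) (use insert.prems Cb_sum[OF insert.hyps(1), of f] in auto)
  finally show ?case using insert by simp
qed

definition adm :: "'z set \<Rightarrow> ('z \<Rightarrow> real) set" where
  "adm F = {h\<in>Cb. (\<forall>x. 0 \<le> h x) \<and> (\<forall>x\<in>F. 1 \<le> h x)}"

definition m :: "'z set \<Rightarrow> real" where
  "m F = Inf (L ` adm F)"

lemma one_adm: "(\<lambda>x. 1) \<in> adm F"
  unfolding adm_def by simp

lemma adm_L_nonneg: "h \<in> adm F \<Longrightarrow> 0 \<le> L h"
  unfolding adm_def using L_pos by blast

lemma bdd_L_adm: "bdd_below (L ` adm F)"
  unfolding bdd_below_def using adm_L_nonneg by blast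

lemma m_le: "h \<in> adm F \<Longrightarrow> m F \<le> L h"
  unfolding m_def by (rule cInf_lower) (use bdd_L_adm in auto)

lemma m_nonneg: "0 \<le> m F"
  unfolding m_def by (rule cInf_greatest) (use one_adm adm_L_nonneg in auto)

lemma m_le1: "m F \<le> 1"
  using m_le[OF one_adm] L_one by simp

lemma m_approx: "\<epsilon> > 0 \<Longrightarrow> \<exists>h\<in>adm F. L h < m F + \<epsilon>"
proof (rule ccontr)
  assume e: "\<epsilon> > 0" and n: "\<not> (\<exists>h\<in>adm F. L h < m F + \<epsilon>)"
  have "m F + \<epsilon> \<le> m F"
    unfolding m_def[of F] by (rule cInf_greatest) (use one_adm n[unfolded m_def] in \<open>auto simp: not_less\<close>)
  then show False using e by simp
qed

lemma m_mono: "F \<subseteq> G \<Longrightarrow> m F \<le> m G"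
  unfolding m_def[of G]
proof (rule cInf_greatest)
  assume FG: "F \<subseteq> G"
  show "L ` adm G \<noteq> {}" using one_adm by blast
  fix y assume "y \<in> L ` adm G"
  then obtain h where h: "h \<in> adm G" "y = L h" by blast
  then have "h \<in> adm F" using FG unfolding adm_def by blast
  then show "m F \<le> y" using h m_le by simp
qed

lemma m_upper:
  assumes g: "g \<in> Cb" and g1: "\<forall>x. g x \<le> 1" and g0: "\<forall>x. x \<notin> F \<longrightarrow> g x \<le> 0"
  shows "L g \<le> m F"
  unfolding m_def
proof (rule cInf_greatest)
  show "L ` adm F \<noteq> {}" using one_adm by blast
  fix y assume "y \<in> L ` adm F"
  then obtain h where h: "h \<in> adm F" "y = L h" by blast
  have "\<forall>x. g x \<le> h x"
  proof
    fix x show "g x \<le> h x"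
    proof (cases "x \<in> F")
      case True
      then have "1 \<le> h x" using h(1) unfolding adm_def by blast
      moreover have "g x \<le> 1" using g1 by blast
      ultimately show ?thesis by linarith
    next
      case False
      then have "g x \<le> 0" using g0 by blast
      moreover have "0 \<le> h x" using h(1) unfolding adm_def by blast
      ultimately show ?thesis by linarith
    qed
  qed
  then show "L g \<le> y" using h L_mono[OF g] unfolding adm_def by blast
qed

lemma m_UNIV: "m UNIV = 1"
proof -
  have "1 \<le> m UNIV"
    unfolding m_def
  proof (rule cInf_greatest)
    show "L ` adm UNIV \<noteq> {}" using one_adm by blast
    fix y assume "y \<in> L ` adm UNIV"
    then obtain h where h: "h \<in> adm UNIV" "y = L h" by blast
    then have "L (\<lambda>x. 1) \<le> L h" using L_mono[of "\<lambda>x. 1" h] unfolding adm_def by auto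
    then show "1 \<le> y" using h L_one by simp
  qed
  then show ?thesis using m_le1[of UNIV] by simp
qed

lemma m_submod: "m (F \<union> G) + m (F \<inter> G) \<le> m F + m G"
proof (rule field_le_epsilon)
  fix e :: real assume e: "0 < e"
  obtain h1 where h1: "h1 \<in> adm F" "L h1 < m F + e/2" using m_approx[of "e/2" F] e by auto
  obtain h2 where h2: "h2 \<in> adm G" "L h2 < m G + e/2" using m_approx[of "e/2" G] e by auto
  have c1: "h1 \<in> Cb" and c2: "h2 \<in> Cb" using h1 h2 unfolding adm_def by auto
  have "(\<lambda>x. max (h1 x) (h2 x)) \<in> adm (F \<union> G)"
    using h1(1) h2(1) Cb_max[OF c1 c2] unfolding adm_def by (auto simp: le_max_iff_disj)
  then have a: "m (F \<union> G) \<le> L (\<lambda>x. max (h1 x) (h2 x))" by (rule m_le)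
  have "(\<lambda>x. min (h1 x) (h2 x)) \<in> adm (F \<inter> G)"
    using h1(1) h2(1) Cb_min[OF c1 c2] unfolding adm_def by auto
  then have b: "m (F \<inter> G) \<le> L (\<lambda>x. min (h1 x) (h2 x))" by (rule m_le)
  have "L (\<lambda>x. max (h1 x) (h2 x)) + L (\<lambda>x. min (h1 x) (h2 x)) = L (\<lambda>x. max (h1 x) (h2 x) + min (h1 x) (h2 x))"
    using L_add[OF Cb_max[OF c1 c2] Cb_min[OF c1 c2]] by simp
  also have "(\<lambda>x. max (h1 x) (h2 x) + min (h1 x) (h2 x)) = (\<lambda>x. h1 x + h2 x)"
    by (rule ext) simp
  also have "L \<dots> = L h1 + L h2" using L_add[OF c1 c2] .
  finally show "m (F \<union> G) + m (F \<inter> G) \<le> m F + m G + e" using a b h1 h2 by linarith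
qed

lemma m_subadd: "m (F \<union> G) \<le> m F + m G"
  using m_submod[of F G] m_nonneg[of "F \<inter> G"] by linarith

lemma m_disj:
  assumes F: "F \<in> zero_sets" and G: "G \<in> zero_sets" and d: "F \<inter> G = {}"
  shows "m F + m G \<le> m (F \<union> G)"
proof (rule field_le_epsilon)
  fix e :: real assume e: "0 < e"
  obtain h where h: "h \<in> adm (F \<union> G)" "L h < m (F \<union> G) + e" using m_approx[of e] e by auto
  have hc: "h \<in> Cb" using h unfolding adm_def by auto
  obtain u where u: "u \<in> Cb" "\<forall>x. 0 \<le> u x \<and> u x \<le> 1" "\<forall>x\<in>F. u x = 1" "\<forall>x\<in>G. u x = 0"
    using zero_sets_separate[OF F G d] by blast
  have c1: "(\<lambda>x. h x * u x) \<in> Cb" using Cb_mult[OF hc u(1)] .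
  have c2: "(\<lambda>x. h x * (1 - u x)) \<in> Cb" using Cb_mult[OF hc Cb_diff[OF Cb_const u(1)]] .
  have "(\<lambda>x. h x * u x) \<in> adm F"
    using h(1) u c1 unfolding adm_def by auto
  then have a: "m F \<le> L (\<lambda>x. h x * u x)" by (rule m_le)
  have "(\<lambda>x. h x * (1 - u x)) \<in> adm G"
    using h(1) u c2 unfolding adm_def by auto
  then have b: "m G \<le> L (\<lambda>x. h x * (1 - u x))" by (rule m_le)
  have "L (\<lambda>x. h x * u x) + L (\<lambda>x. h x * (1 - u x)) = L (\<lambda>x. h x * u x + h x * (1 - u x))"
    using L_add[OF c1 c2] by simp
  also have "(\<lambda>x. h x * u x + h x * (1 - u x)) = h" by (rule ext) (simp add: algebra_simps)
  finally show "m F + m G \<le> m (F \<union> G) + e" using a b h by linarith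
qed

lemma core:
  assumes H: "H \<in> zero_sets" and h: "h \<in> adm K" and s: "0 < s" "s < 1"
  shows "H \<inter> {x. h x \<le> s} \<in> zero_sets" "H \<inter> {x. h x \<le> s} \<inter> K = {}" "H \<inter> {x. h x \<le> s} \<subseteq> H"
    "m H \<le> m (H \<inter> {x. h x \<le> s}) + L h / s"
proof -
  have hc: "h \<in> Cb" using h unfolding adm_def by auto
  then have cont: "continuous_on UNIV h" by (simp add: Cb_iff)
  show "H \<inter> {x. h x \<le> s} \<in> zero_sets" by (rule zero_sets_Int[OF H zero_sets_le[OF cont]])
  show "H \<inter> {x. h x \<le> s} \<inter> K = {}" using h s unfolding adm_def by force
  show "H \<inter> {x. h x \<le> s} \<subseteq> H" by blast
  have "(\<lambda>x. (1/s) * h x) \<in> adm {x. s \<le> h x}"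
    using h s Cb_cmult[OF hc, of "1/s"] unfolding adm_def by (auto simp: field_simps)
  then have "m {x. s \<le> h x} \<le> L (\<lambda>x. (1/s) * h x)" by (rule m_le)
  also have "\<dots> = L h / s" using L_cmult[OF hc, of "1/s"] by simp
  finally have a: "m {x. s \<le> h x} \<le> L h / s" .
  have "H \<subseteq> (H \<inter> {x. h x \<le> s}) \<union> {x. s \<le> h x}" by auto
  then have "m H \<le> m ((H \<inter> {x. h x \<le> s}) \<union> {x. s \<le> h x})" by (rule m_mono)
  also have "\<dots> \<le> m (H \<inter> {x. h x \<le> s}) + m {x. s \<le> h x}" by (rule m_subadd)
  finally show "m H \<le> m (H \<inter> {x. h x \<le> s}) + L h / s" using a by linarith
qed

lemma core_eps:
  assumes H: "H \<in> zero_sets" and e: "0 < e" "e < 1"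
  shows "\<exists>G\<in>zero_sets. G \<subseteq> H \<and> G \<inter> K = {} \<and> m H < m G + m K + 3 * e"
proof -
  obtain h where h: "h \<in> adm K" "L h < m K + e" using m_approx[of e K] e by auto
  define s where "s = 1 / (1 + e)"
  have s: "0 < s" "s < 1" unfolding s_def using e by auto
  note c = core[OF H h(1) s]
  have "L h / s = L h * (1 + e)" unfolding s_def by simp
  also have "\<dots> < (m K + e) * (1 + e)" using h(2) e by (intro mult_strict_right_mono) auto
  also have "\<dots> = m K + e * (1 + m K + e)" by (simp add: algebra_simps)
  also have "\<dots> \<le> m K + e * 3" using m_le1[of K] e by (intro add_left_mono mult_left_mono) auto
  finally have "L h / s < m K + 3 * e" by simp
  then show ?thesis using c by (intro bexI[of _ "H \<inter> {x. h x \<le> s}"]) auto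
qed

lemma m_supmod:
  assumes F: "F \<in> zero_sets" and G: "G \<in> zero_sets"
  shows "m F + m G \<le> m (F \<union> G) + m (F \<inter> G)"
proof (rule eps3_le)
  fix e :: real assume e: "0 < e" "e < 1"
  obtain G' where G': "G' \<in> zero_sets" "G' \<subseteq> G" "G' \<inter> (F \<inter> G) = {}" "m G < m G' + m (F \<inter> G) + 3 * e"
    using core_eps[OF G e, of "F \<inter> G"] by blast
  have "F \<inter> G' = {}" using G'(2,3) by blast
  then have "m F + m G' \<le> m (F \<union> G')" by (rule m_disj[OF F G'(1)])
  also have "\<dots> \<le> m (F \<union> G)" using G'(2) by (intro m_mono) blast
  finally show "m F + m G \<le> m (F \<union> G) + m (F \<inter> G) + 3 * e" using G'(4) by linarith
qed

lemma m_modular: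
  assumes F: "F \<in> zero_sets" and G: "G \<in> zero_sets"
  shows "m (F \<union> G) + m (F \<inter> G) = m F + m G"
  using m_submod[of F G] m_supmod[OF F G] by linarith

end


lemma clamp_sum: "(\<Sum>k<N. min 1 (max 0 (y - real k))) = min (max y 0) (real N)"
proof (induction N)
  case 0 then show ?case by simp
next
  case (Suc N)
  have "(\<Sum>k<Suc N. min 1 (max 0 (y - real k))) = min (max y 0) (real N) + min 1 (max 0 (y - real N))"
    using Suc by simp
  also have "\<dots> = min (max y 0) (real (Suc N))" by (simp add: min_def max_def)
  finally show ?case .
qed

lemma int_sum: assumes g: "fa \<gamma>" shows "finite I \<Longrightarrow> (\<And>i. i \<in> I \<Longrightarrow> f i \<in> Cb) \<Longrightarrow>
    fa_integral \<gamma> (\<lambda>x. \<Sum>i\<in>I. f i x) = (\<Sum>i\<in>I. fa_integral \<gamma> (f i))"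
proof (induction I rule: finite_induct)
  case empty
  then show ?case using int_const[OF g, of 0] by simp
next
  case (insert j I)
  have "fa_integral \<gamma> (\<lambda>x. \<Sum>i\<in>insert j I. f i x) = fa_integral \<gamma> (\<lambda>x. 1 * f j x + 1 * (\<Sum>i\<in>I. f i x))"
    using insert.hyps by simp
  also have "\<dots> = fa_integral \<gamma> (f j) + fa_integral \<gamma> (\<lambda>x. \<Sum>i\<in>I. f i x)"
    using int_lin[OF g, of "f j" "\<lambda>x. \<Sum>i\<in>I. f i x" 1 1] insert.prems Cb_sum[OF insert.hyps(1), of f]
    by simp
  finally show ?case using insert by simp
qed

context posfun
begin

definition good :: "'z set \<Rightarrow> bool" where
  "good A \<longleftrightarrow> (\<forall>\<epsilon>>0. \<exists>F\<in>zero_sets. \<exists>G\<in>zero_sets. F \<subseteq> A \<and> G \<subseteq> - A \<and> 1 - \<epsilon> < m F + m G)"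

lemma good_zero: "K \<in> zero_sets \<Longrightarrow> good K"
  unfolding good_def
proof (intro allI impI)
  fix \<epsilon> :: real assume K: "K \<in> zero_sets" and e: "0 < \<epsilon>"
  define e where "e = min (\<epsilon>/3) (1/2)"
  have e1: "0 < e" "e < 1" "3 * e \<le> \<epsilon>" unfolding e_def using e by auto
  obtain G where G: "G \<in> zero_sets" "G \<subseteq> UNIV" "G \<inter> K = {}" "m UNIV < m G + m K + 3 * e"
    using core_eps[OF zero_sets_UNIV e1(1,2), of K] by blast
  have "G \<subseteq> - K" using G(3) by blast
  moreover have "1 - \<epsilon> < m K + m G" using G(4) m_UNIV e1(3) by linarith
  ultimately show "\<exists>F\<in>zero_sets. \<exists>G\<in>zero_sets. F \<subseteq> K \<and> G \<subseteq> - K \<and> 1 - \<epsilon> < m F + m G"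
    using K G(1) by blast
qed

lemma good_compl: "good A \<Longrightarrow> good (- A)"
  unfolding good_def
proof (intro allI impI)
  fix \<epsilon> :: real assume g: "\<forall>\<epsilon>>0. \<exists>F\<in>zero_sets. \<exists>G\<in>zero_sets. F \<subseteq> A \<and> G \<subseteq> - A \<and> 1 - \<epsilon> < m F + m G"
    and e: "0 < \<epsilon>"
  obtain F G where FG: "F \<in> zero_sets" "G \<in> zero_sets" "F \<subseteq> A" "G \<subseteq> - A" "1 - \<epsilon> < m F + m G"
    using g e by blast
  show "\<exists>F\<in>zero_sets. \<exists>G\<in>zero_sets. F \<subseteq> - A \<and> G \<subseteq> - (- A) \<and> 1 - \<epsilon> < m F + m G"
    using FG by (intro bexI[of _ G] bexI[of _ F]) auto
qed

lemma good_Un: "good A \<Longrightarrow> good B \<Longrightarrow> good (A \<union> B)"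
  unfolding good_def
proof (intro allI impI)
  fix \<epsilon> :: real
  assume gA: "\<forall>\<epsilon>>0. \<exists>F\<in>zero_sets. \<exists>G\<in>zero_sets. F \<subseteq> A \<and> G \<subseteq> - A \<and> 1 - \<epsilon> < m F + m G"
    and gB: "\<forall>\<epsilon>>0. \<exists>F\<in>zero_sets. \<exists>G\<in>zero_sets. F \<subseteq> B \<and> G \<subseteq> - B \<and> 1 - \<epsilon> < m F + m G"
    and e: "0 < \<epsilon>"
  have e2: "0 < \<epsilon>/2" using e by simp
  obtain F1 G1 where 1: "F1 \<in> zero_sets" "G1 \<in> zero_sets" "F1 \<subseteq> A" "G1 \<subseteq> - A" "1 - \<epsilon>/2 < m F1 + m G1"
    using gA e2 by blast
  obtain F2 G2 where 2: "F2 \<in> zero_sets" "G2 \<in> zero_sets" "F2 \<subseteq> B" "G2 \<subseteq> - B" "1 - \<epsilon>/2 < m F2 + m G2"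
    using gB e2 by blast
  have z1: "F1 \<union> F2 \<in> zero_sets" "F1 \<inter> F2 \<in> zero_sets" using zero_sets_Un zero_sets_Int 1 2 by auto
  have z2: "G1 \<union> G2 \<in> zero_sets" "G1 \<inter> G2 \<in> zero_sets" using zero_sets_Un zero_sets_Int 1 2 by auto
  have mF: "m (F1 \<union> F2) = m F1 + m F2 - m (F1 \<inter> F2)" using m_modular[OF 1(1) 2(1)] by linarith
  have mG: "m (G1 \<inter> G2) = m G1 + m G2 - m (G1 \<union> G2)" using m_modular[OF 1(2) 2(2)] by linarith
  have d: "(F1 \<inter> F2) \<inter> (G1 \<union> G2) = {}" using 1 2 by blast
  have "m (F1 \<inter> F2) + m (G1 \<union> G2) \<le> m ((F1 \<inter> F2) \<union> (G1 \<union> G2))" by (rule m_disj[OF z1(2) z2(1) d])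
  also have "\<dots> \<le> 1" by (rule m_le1)
  finally have "1 - \<epsilon> < m (F1 \<union> F2) + m (G1 \<inter> G2)" using mF mG 1(5) 2(5) by linarith
  moreover have "F1 \<union> F2 \<subseteq> A \<union> B" "G1 \<inter> G2 \<subseteq> - (A \<union> B)" using 1 2 by auto
  ultimately show "\<exists>F\<in>zero_sets. \<exists>G\<in>zero_sets. F \<subseteq> A \<union> B \<and> G \<subseteq> - (A \<union> B) \<and> 1 - \<epsilon> < m F + m G"
    using z1(1) z2(2) by blast
qed

lemma zs_good: "A \<in> zs_algebra \<Longrightarrow> good A"
proof -
  assume A: "A \<in> zs_algebra"
  have "algebra UNIV {A. good A}"
    unfolding algebra_iff_Un
  proof (intro conjI ballI)
    show "{A. good A} \<subseteq> Pow UNIV" by simp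
    show "{} \<in> {A. good A}" using good_zero[OF zero_sets_empty] by simp
    fix a assume "a \<in> {A. good A}"
    then show "UNIV - a \<in> {A. good A}" using good_compl by (simp add: Compl_eq_Diff_UNIV[symmetric])
    fix b assume "b \<in> {A. good A}"
    then show "a \<union> b \<in> {A. good A}" using good_Un \<open>a \<in> {A. good A}\<close> by simp
  qed
  moreover have "zero_sets \<subseteq> {A. good A}" using good_zero by blast
  ultimately have "zs_algebra \<subseteq> {A. good A}" by (rule zs_minimal)
  then show ?thesis using A by blast
qed

definition gam :: "'z set \<Rightarrow> real" where
  "gam A = (if A \<in> zs_algebra then Sup (m ` {F. F \<in> zero_sets \<and> F \<subseteq> A}) else 0)"

lemma gam_upper: "A \<in> zs_algebra \<Longrightarrow> F \<in> zero_sets \<Longrightarrow> F \<subseteq> A \<Longrightarrow> m F \<le> gam A"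
  unfolding gam_def
  by (simp, rule cSup_upper) (auto simp: bdd_above_def intro: m_le1)

lemma gam_least: "A \<in> zs_algebra \<Longrightarrow> (\<And>F. F \<in> zero_sets \<Longrightarrow> F \<subseteq> A \<Longrightarrow> m F \<le> c) \<Longrightarrow> gam A \<le> c"
  unfolding gam_def
  by (simp, rule cSup_least) (use zero_sets_empty in blast)+

lemma gam_zero: "F \<in> zero_sets \<Longrightarrow> gam F = m F"
  using gam_upper[OF zs_zero, of F F] gam_least[OF zs_zero, of F "m F"] m_mono by force

lemma gam_approx:
  assumes A: "A \<in> zs_algebra" and e: "\<epsilon> > 0"
  shows "\<exists>F\<in>zero_sets. F \<subseteq> A \<and> gam A < m F + \<epsilon>"
proof (rule ccontr)
  assume "\<not> ?thesis"
  then have "\<And>F. F \<in> zero_sets \<Longrightarrow> F \<subseteq> A \<Longrightarrow> m F \<le> gam A - \<epsilon>" by force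
  then have "gam A \<le> gam A - \<epsilon>" by (rule gam_least[OF A])
  then show False using e by simp
qed

lemma gam_nonneg: "0 \<le> gam A"
proof (cases "A \<in> zs_algebra")
  case True then show ?thesis using gam_upper[OF True zero_sets_empty] m_nonneg[of "{}"] by simp
next
  case False then show ?thesis by (simp add: gam_def)
qed

lemma gam_add:
  assumes A: "A \<in> zs_algebra" and B: "B \<in> zs_algebra" and d: "A \<inter> B = {}"
  shows "gam (A \<union> B) = gam A + gam B"
proof (rule antisym)
  have AB: "A \<union> B \<in> zs_algebra" using zs_Un[OF A B] .
  show "gam A + gam B \<le> gam (A \<union> B)"
  proof (rule field_le_epsilon)
    fix e :: real assume e: "0 < e"
    obtain F where F: "F \<in> zero_sets" "F \<subseteq> A" "gam A < m F + e/2" using gam_approx[OF A, of "e/2"] e by auto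
    obtain G where G: "G \<in> zero_sets" "G \<subseteq> B" "gam B < m G + e/2" using gam_approx[OF B, of "e/2"] e by auto
    have "F \<inter> G = {}" using F G d by blast
    then have "m F + m G \<le> m (F \<union> G)" by (rule m_disj[OF F(1) G(1)])
    also have "\<dots> \<le> gam (A \<union> B)" using gam_upper[OF AB zero_sets_Un[OF F(1) G(1)]] F G by blast
    finally show "gam A + gam B \<le> gam (A \<union> B) + e" using F G by linarith
  qed
  show "gam (A \<union> B) \<le> gam A + gam B"
  proof (rule gam_least[OF AB])
    fix H assume H: "H \<in> zero_sets" "H \<subseteq> A \<union> B"
    show "m H \<le> gam A + gam B"
    proof (rule field_le_epsilon)
      fix e :: real assume e: "0 < e"
      obtain F G where FG: "F \<in> zero_sets" "G \<in> zero_sets" "F \<subseteq> A" "G \<subseteq> - A" "1 - e < m F + m G"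
        using zs_good[OF A] e unfolding good_def by blast
      have mod: "m (H \<union> G) + m (H \<inter> G) = m H + m G" by (rule m_modular[OF H(1) FG(2)])
      have "H \<inter> G \<subseteq> B" using H FG by blast
      then have "m (H \<inter> G) \<le> gam B" using gam_upper[OF B zero_sets_Int[OF H(1) FG(2)]] by blast
      moreover have "m F \<le> gam A" by (rule gam_upper[OF A FG(1) FG(3)])
      moreover have "m (H \<union> G) \<le> 1" by (rule m_le1)
      ultimately show "m H \<le> gam A + gam B + e" using mod FG(5) by linarith
    qed
  qed
qed

lemma gam_UNIV: "gam UNIV = 1"
  using gam_zero[OF zero_sets_UNIV] m_UNIV by simp

lemma gam_M1: "gam \<in> M1"
  unfolding M1_def
proof (intro CollectI conjI allI impI ballI)
  fix A :: "'z set"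
  show "A \<notin> zs_algebra \<Longrightarrow> gam A = 0" by (simp add: gam_def)
  show "0 \<le> gam A" by (rule gam_nonneg)
next
  fix A B :: "'z set" assume "A \<in> zs_algebra" "B \<in> zs_algebra" "A \<inter> B = {}"
  then show "gam (A \<union> B) = gam A + gam B" by (rule gam_add)
next
  show "gam UNIV = 1" by (rule gam_UNIV)
next
  fix A :: "'z set" and \<epsilon> :: real assume A: "A \<in> zs_algebra" and e: "0 < \<epsilon>"
  obtain F where F: "F \<in> zero_sets" "F \<subseteq> A" "gam A < m F + \<epsilon>" using gam_approx[OF A e] by blast
  have D: "A - F \<in> zs_algebra" using zs_Diff[OF A zs_zero[OF F(1)]] .
  have "gam A = gam (F \<union> (A - F))" using F(2) by (simp add: Un_absorb1 Un_Diff_cancel)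
  also have "\<dots> = gam F + gam (A - F)" by (rule gam_add[OF zs_zero[OF F(1)] D]) blast
  finally have "gam (A - F) < \<epsilon>" using gam_zero[OF F(1)] F(3) by linarith
  then show "\<exists>F\<in>zero_sets. F \<subseteq> A \<and> gam (A - F) < \<epsilon>" using F by blast
qed

lemma gam_fa: "fa gam"
  by (rule M1_fa[OF gam_M1])

end


context posfun
begin

lemma L_le_int:
  assumes f: "f \<in> Cb"
  shows "L f \<le> fa_integral gam f"
proof (rule field_le_epsilon)
  fix \<delta> :: real assume d: "0 < \<delta>"
  obtain B where B: "\<forall>x. \<bar>f x\<bar> \<le> B" using Cb_bound[OF f] by blast
  obtain N :: nat where N: "2 * B / \<delta> \<le> real N" using real_arch_simple by blast
  define u where "u x = (1/\<delta>) * f x + (B/\<delta>) * 1" for x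
  have uC: "u \<in> Cb" unfolding u_def by (intro Cb_add Cb_cmult f Cb_const)
  have ucont: "continuous_on UNIV u" using uC by (simp add: Cb_iff)
  define g where "g k x = min 1 (max 0 (u x - real k))" for k :: nat and x
  have gC: "g k \<in> Cb" for k unfolding g_def by (intro Cb_clamp Cb_diff uC Cb_const)
  have u0: "0 \<le> u x" for x
  proof -
    have "0 \<le> f x + B" using B[rule_format, of x] by linarith
    then have "0 \<le> (f x + B) / \<delta>" using d by simp
    then show ?thesis unfolding u_def by (simp add: add_divide_distrib)
  qed
  have uN: "u x \<le> real N" for x
  proof -
    have "f x + B \<le> 2 * B" using B[rule_format, of x] by linarith
    then have "(f x + B) / \<delta> \<le> 2 * B / \<delta>" using d by (simp add: divide_right_mono)
    then show ?thesis using N unfolding u_def by (simp add: add_divide_distrib)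
  qed
  have fx: "f x = (- B) * 1 + \<delta> * (\<Sum>k<N. g k x)" for x
  proof -
    have "(\<Sum>k<N. g k x) = min (max (u x) 0) (real N)" unfolding g_def by (rule clamp_sum)
    also have "\<dots> = u x" using u0[of x] uN[of x] by simp
    finally have "\<delta> * (\<Sum>k<N. g k x) = f x + B" unfolding u_def using d by (simp add: algebra_simps)
    then show ?thesis by simp
  qed
  then have feq: "f = (\<lambda>x. (- B) * 1 + \<delta> * (\<Sum>k<N. g k x))" by (rule ext)
  have sC: "(\<lambda>x. \<Sum>k<N. g k x) \<in> Cb" by (rule Cb_sum) (use gC in auto)
  have Lf: "L f = - B + \<delta> * (\<Sum>k<N. L (g k))"
    using L_lin[of "\<lambda>x. 1" "\<lambda>x. \<Sum>k<N. g k x" "- B" \<delta>] sC L_one L_sum[of "{..<N}" g] gC feq by simp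
  have If: "fa_integral gam f = - B + \<delta> * (\<Sum>k<N. fa_integral gam (g k))"
    using int_lin[OF gam_fa, of "\<lambda>x. 1" "\<lambda>x. \<Sum>k<N. g k x" "- B" \<delta>] sC int_const[OF gam_fa, of 1] int_sum[OF gam_fa, of "{..<N}" g] gC feq
    by simp
  define F where "F k = {x. real k \<le> u x}" for k :: nat
  have Fz: "F k \<in> zero_sets" for k unfolding F_def by (rule zero_sets_ge[OF ucont])
  have Lg: "L (g k) \<le> m (F k)" for k
  proof (rule m_upper[OF gC])
    show "\<forall>x. g k x \<le> 1" unfolding g_def by simp
    show "\<forall>x. x \<notin> F k \<longrightarrow> g k x \<le> 0" unfolding g_def F_def by simp
  qed
  have Ig: "m (F (Suc k)) \<le> fa_integral gam (g k)" for k
  proof -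
    have "gam (F (Suc k)) \<le> fa_integral gam (g k)"
    proof (rule int_lower_set[OF gam_fa Cb_bdd[OF gC] _ zs_zero[OF Fz]])
      show "\<forall>x. 0 \<le> g k x" unfolding g_def by simp
      show "\<forall>x\<in>F (Suc k). 1 \<le> g k x" unfolding g_def F_def by simp
    qed
    then show ?thesis using gam_zero[OF Fz] by simp
  qed
  have "(\<Sum>k<N. L (g k)) - (\<Sum>k<N. fa_integral gam (g k)) \<le> (\<Sum>k<N. m (F k) - m (F (Suc k)))"
    unfolding sum_subtractf[symmetric] by (rule sum_mono) (use Lg Ig in \<open>smt (verit)\<close>)
  also have "\<dots> = m (F 0) - m (F N)" by (rule sum_lessThan_telescope')
  also have "\<dots> \<le> 1" using m_le1[of "F 0"] m_nonneg[of "F N"] by linarith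
  finally have "\<delta> * ((\<Sum>k<N. L (g k)) - (\<Sum>k<N. fa_integral gam (g k))) \<le> \<delta> * 1"
    using d by (intro mult_left_mono) auto
  then show "L f \<le> fa_integral gam f + \<delta>" using Lf If by (simp add: algebra_simps)
qed

lemma int_eq_L:
  assumes f: "f \<in> Cb"
  shows "fa_integral gam f = L f"
proof -
  have mf: "(\<lambda>x. - f x) \<in> Cb" by (rule Cb_minus[OF f])
  have "L (\<lambda>x. - f x) \<le> fa_integral gam (\<lambda>x. - f x)" by (rule L_le_int[OF mf])
  moreover have "L (\<lambda>x. - f x) = - L f" using L_cmult[OF f, of "-1"] by simp
  moreover have "fa_integral gam (\<lambda>x. - f x) = - fa_integral gam f"
    using int_lin[OF gam_fa f f, of "-1" 0] by simp
  ultimately show ?thesis using L_le_int[OF f] by linarith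
qed

end

theorem representation:
  assumes "posfun L"
  shows "\<exists>\<gamma>\<in>M1. \<forall>f\<in>Cb. fa_integral \<gamma> f = L f"
  using posfun.gam_M1[OF assms] posfun.int_eq_L[OF assms] by blast


lemma compactin_pullback:
  assumes S: "S \<subseteq> A" and K: "compactin Y (f ` S)"
  shows "compactin (pullback_topology A f Y) S"
  unfolding compactin_def
proof (intro conjI allI impI)
  have "f ` S \<subseteq> topspace Y" using K by (rule compactin_subset_topspace)
  then show "S \<subseteq> topspace (pullback_topology A f Y)"
    using S by (auto simp: topspace_pullback_topology)
  fix \<U> assume U: "(\<forall>U\<in>\<U>. openin (pullback_topology A f Y) U) \<and> S \<subseteq> \<Union>\<U>"
  have "\<forall>U\<in>\<U>. \<exists>V. openin Y V \<and> U = f -` V \<inter> A"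
    using U by (simp add: openin_pullback_topology)
  then obtain V where V: "\<And>U. U \<in> \<U> \<Longrightarrow> openin Y (V U) \<and> U = f -` (V U) \<inter> A" by metis
  have "f ` S \<subseteq> \<Union> (V ` \<U>)"
  proof
    fix y assume "y \<in> f ` S"
    then obtain x where x: "x \<in> S" "y = f x" by blast
    then obtain U where "U \<in> \<U>" "x \<in> U" using U by blast
    then show "y \<in> \<Union> (V ` \<U>)" using V[of U] x by blast
  qed
  moreover have "\<forall>W\<in>V ` \<U>. openin Y W" using V by blast
  ultimately obtain \<F>' where F': "finite \<F>'" "\<F>' \<subseteq> V ` \<U>" "f ` S \<subseteq> \<Union>\<F>'"
    using K unfolding compactin_def by meson
  obtain \<F> where F: "\<F> \<subseteq> \<U>" "finite \<F>" "\<F>' = V ` \<F>"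
    using finite_subset_image[OF F'(1) F'(2)] by blast
  have "S \<subseteq> \<Union>\<F>"
  proof
    fix x assume x: "x \<in> S"
    then obtain W where W: "W \<in> \<F>'" "f x \<in> W" using F'(3) by blast
    then obtain U where U': "U \<in> \<F>" "W = V U" using F(3) by blast
    then have "x \<in> U" using V[of U] F(1) W x S by blast
    then show "x \<in> \<Union>\<F>" using U' by blast
  qed
  then show "\<exists>\<F>. finite \<F> \<and> \<F> \<subseteq> \<U> \<and> S \<subseteq> \<Union>\<F>" using F by blast
qed

lemma open_nbhd:
  assumes "finite Fs" "Fs \<subseteq> I"
  shows "openin (powertop_real I) {y \<in> topspace (powertop_real I). \<forall>f\<in>Fs. \<bar>y f - x f\<bar> < \<epsilon>}"
  using assms
proof (induction Fs rule: finite_induct)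
  case empty
  then show ?case using openin_topspace[of "powertop_real I"] by simp
next
  case (insert g Fs)
  have c: "continuous_map (powertop_real I) euclideanreal (\<lambda>y. y g)"
    using insert.prems by (intro continuous_map_product_projection) auto
  have o: "openin euclideanreal {r. \<bar>r - x g\<bar> < \<epsilon>}"
  proof -
    have "{r. \<bar>r - x g\<bar> < \<epsilon>} = ball (x g) \<epsilon>" by (auto simp: dist_real_def abs_minus_commute)
    then show ?thesis by simp
  qed
  have "openin (powertop_real I) ({y \<in> topspace (powertop_real I). y g \<in> {r. \<bar>r - x g\<bar> < \<epsilon>}}
      \<inter> {y \<in> topspace (powertop_real I). \<forall>f\<in>Fs. \<bar>y f - x f\<bar> < \<epsilon>})"
    using openin_continuous_map_preimage[OF c o] insert by blast
  moreover have "{y \<in> topspace (powertop_real I). y g \<in> {r. \<bar>r - x g\<bar> < \<epsilon>}}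
      \<inter> {y \<in> topspace (powertop_real I). \<forall>f\<in>Fs. \<bar>y f - x f\<bar> < \<epsilon>}
      = {y \<in> topspace (powertop_real I). \<forall>f\<in>insert g Fs. \<bar>y f - x f\<bar> < \<epsilon>}" by auto
  ultimately show ?case by simp
qed

definition Tm :: "('z::topological_space set \<Rightarrow> real) \<Rightarrow> ('z \<Rightarrow> real) \<Rightarrow> real" where
  "Tm \<gamma> = restrict (\<lambda>f. fa_integral \<gamma> f) Cb"

lemma weak_top_Tm: "weak_top = pullback_topology M1 Tm (powertop_real Cb)"
  unfolding weak_top_def Tm_def ..

lemma closure_approx:
  assumes x: "x \<in> powertop_real Cb closure_of (Tm ` S)" and Fs: "finite Fs" "Fs \<subseteq> Cb" and e: "\<epsilon> > 0"
  shows "\<exists>\<gamma>\<in>S. \<forall>f\<in>Fs. \<bar>fa_integral \<gamma> f - x f\<bar> < \<epsilon>"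
proof -
  define W where "W = {y \<in> topspace (powertop_real Cb). \<forall>f\<in>Fs. \<bar>y f - x f\<bar> < \<epsilon>}"
  have "openin (powertop_real Cb) W" unfolding W_def by (rule open_nbhd[OF Fs])
  moreover have "x \<in> W" unfolding W_def using x e by (auto simp: in_closure_of)
  ultimately obtain y where y: "y \<in> Tm ` S" "y \<in> W" using x unfolding in_closure_of by blast
  then obtain \<gamma> where g: "\<gamma> \<in> S" "y = Tm \<gamma>" by blast
  have "\<forall>f\<in>Fs. y f = fa_integral \<gamma> f" using g Fs(2) unfolding Tm_def by auto
  then show ?thesis using y(2) g(1) unfolding W_def by auto
qed

lemma closure_posfun:
  assumes x: "x \<in> powertop_real Cb closure_of (Tm ` S)" and S: "S \<subseteq> M1"
  shows "posfun x"
proof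
  fix f g :: "'a \<Rightarrow> real" and a b :: real assume f: "f \<in> Cb" and g: "g \<in> Cb"
  define h where "h = (\<lambda>z. a * f z + b * g z)"
  have hC: "h \<in> Cb" unfolding h_def by (intro Cb_add Cb_cmult f g)
  have "x h - (a * x f + b * x g) = 0"
  proof (rule small_zero)
    fix \<delta> :: real assume d: "\<delta> > 0"
    obtain \<gamma> where gS: "\<gamma> \<in> S" and ap: "\<forall>k\<in>{f,g,h}. \<bar>fa_integral \<gamma> k - x k\<bar> < \<delta>"
      using closure_approx[OF x, of "{f,g,h}" \<delta>] f g hC d by auto
    have fa: "fa \<gamma>" using gS S M1_fa by blast
    have lin: "fa_integral \<gamma> h = a * fa_integral \<gamma> f + b * fa_integral \<gamma> g"
      unfolding h_def by (rule int_lin[OF fa f g])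
    have e1: "\<bar>fa_integral \<gamma> h - x h\<bar> \<le> \<delta>" "\<bar>fa_integral \<gamma> f - x f\<bar> \<le> \<delta>" "\<bar>fa_integral \<gamma> g - x g\<bar> \<le> \<delta>"
      using ap by auto
    have "\<bar>a * (fa_integral \<gamma> f - x f)\<bar> \<le> \<bar>a\<bar> * \<delta>" using e1(2) by (simp add: abs_mult mult_left_mono)
    moreover have "\<bar>b * (fa_integral \<gamma> g - x g)\<bar> \<le> \<bar>b\<bar> * \<delta>" using e1(3) by (simp add: abs_mult mult_left_mono)
    ultimately have "\<bar>x h - (a * x f + b * x g)\<bar> \<le> \<delta> + \<bar>a\<bar> * \<delta> + \<bar>b\<bar> * \<delta>"
      using e1(1) lin by (simp add: algebra_simps abs_le_iff) linarith?
    then show "\<bar>x h - (a * x f + b * x g)\<bar> \<le> \<delta> * (1 + \<bar>a\<bar> + \<bar>b\<bar>)" by (simp add: algebra_simps)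
  qed
  then show "x (\<lambda>z. a * f z + b * g z) = a * x f + b * x g" unfolding h_def by simp
next
  fix f :: "'a \<Rightarrow> real" assume f: "f \<in> Cb" and nn: "\<forall>z. 0 \<le> f z"
  show "0 \<le> x f"
  proof (rule field_le_epsilon)
    fix e :: real assume e: "0 < e"
    obtain \<gamma> where gS: "\<gamma> \<in> S" and ap: "\<forall>k\<in>{f}. \<bar>fa_integral \<gamma> k - x k\<bar> < e"
      using closure_approx[OF x, of "{f}" e] f e by auto
    have "0 \<le> fa_integral \<gamma> f" using int_nonneg[OF M1_fa Cb_bdd[OF f] nn] gS S by blast
    then show "0 \<le> x f + e" using ap by auto
  qed
next
  have "\<bar>1 - x (\<lambda>z. 1)\<bar> \<le> e" if e: "0 < e" for e
  proof -
    obtain \<gamma> where gS: "\<gamma> \<in> S" and ap: "\<forall>k\<in>{\<lambda>z. 1}. \<bar>fa_integral \<gamma> k - x k\<bar> < e"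
      using closure_approx[OF x, of "{\<lambda>z. 1}" e] e by auto
    have "fa_integral \<gamma> (\<lambda>z. 1) = 1" using int_const[OF M1_fa] gS S by blast
    then show ?thesis using ap by auto
  qed
  then have "\<bar>1 - x (\<lambda>z. 1)\<bar> \<le> 0" using field_le_epsilon[of "\<bar>1 - x (\<lambda>z. 1)\<bar>" 0] by simp
  then show "x (\<lambda>z. 1) = 1" by simp
qed


lemma oplus_Cb:
  fixes \<phi> :: "'a::topological_space \<Rightarrow> real" and \<psi> :: "'b::topological_space \<Rightarrow> real"
  assumes p: "\<phi> \<in> Cb" and q: "\<psi> \<in> Cb"
  shows "(\<lambda>(x,y). \<phi> x + \<psi> y) \<in> Cb"
proof -
  obtain A where A: "\<forall>x. \<bar>\<phi> x\<bar> \<le> A" using Cb_bound[OF p] by blast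
  obtain B where B: "\<forall>x. \<bar>\<psi> x\<bar> \<le> B" using Cb_bound[OF q] by blast
  have eq: "(\<lambda>(x,y). \<phi> x + \<psi> y) = (\<lambda>z. \<phi> (fst z) + \<psi> (snd z))" by (rule ext) (simp add: case_prod_beta)
  have c1: "continuous_on UNIV (\<lambda>z::'a\<times>'b. \<phi> (fst z))"
    using p by (intro continuous_on_compose2[of UNIV \<phi> UNIV fst]) (auto simp: Cb_iff continuous_on_fst continuous_on_id)
  have c2: "continuous_on UNIV (\<lambda>z::'a\<times>'b. \<psi> (snd z))"
    using q by (intro continuous_on_compose2[of UNIV \<psi> UNIV snd]) (auto simp: Cb_iff continuous_on_snd continuous_on_id)
  have "continuous_on UNIV (\<lambda>z::'a\<times>'b. \<phi> (fst z) + \<psi> (snd z))" using continuous_on_add[OF c1 c2] .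
  moreover have "\<bar>\<phi> (fst z) + \<psi> (snd z)\<bar> \<le> A + B" for z
    using A[rule_format, of "fst z"] B[rule_format, of "snd z"] by linarith
  ultimately show ?thesis unfolding eq Cb_iff by blast
qed

lemma plans_M1: "plans (\<mu>::'a::topological_space measure) (\<nu>::'b::topological_space measure) \<subseteq> M1"
  unfolding plans_def by blast

lemma Tm_topspace: "Tm \<gamma> \<in> topspace (powertop_real Cb)"
  unfolding Tm_def by simp

lemma plans_closed:
  fixes \<mu> :: "'a::topological_space measure" and \<nu> :: "'b::topological_space measure"
  shows "closedin (powertop_real Cb) (Tm ` plans \<mu> \<nu>)"
proof -
  have "powertop_real Cb closure_of (Tm ` plans \<mu> \<nu>) \<subseteq> Tm ` plans \<mu> \<nu>"
  proof
    fix x assume x: "x \<in> powertop_real Cb closure_of (Tm ` plans \<mu> \<nu>)"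
    have pf: "posfun x" by (rule closure_posfun[OF x plans_M1])
    obtain \<gamma> where g: "\<gamma> \<in> M1" "\<forall>f\<in>Cb. fa_integral \<gamma> f = x f"
      using representation[OF pf] by blast
    have "\<gamma> \<in> plans \<mu> \<nu>"
      unfolding plans_def
    proof (intro CollectI conjI ballI)
      show "\<gamma> \<in> M1" by (rule g(1))
      fix \<phi> :: "'a \<Rightarrow> real" and \<psi> :: "'b \<Rightarrow> real" assume p: "\<phi> \<in> Cb" and q: "\<psi> \<in> Cb"
      define h where "h = (\<lambda>(x::'a,y::'b). \<phi> x + \<psi> y)"
      have hC: "h \<in> Cb" unfolding h_def by (rule oplus_Cb[OF p q])
      have "\<bar>x h - (integral\<^sup>L \<mu> \<phi> + integral\<^sup>L \<nu> \<psi>)\<bar> \<le> 0 + e" if e: "0 < e" for e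
      proof -
        obtain \<gamma>' where g': "\<gamma>' \<in> plans \<mu> \<nu>" "\<forall>k\<in>{h}. \<bar>fa_integral \<gamma>' k - x k\<bar> < e"
          using closure_approx[OF x, of "{h}" e] hC e by auto
        have "fa_integral \<gamma>' h = integral\<^sup>L \<mu> \<phi> + integral\<^sup>L \<nu> \<psi>"
          using g'(1) p q unfolding plans_def h_def by blast
        then show ?thesis using g'(2) by auto
      qed
      then have "\<bar>x h - (integral\<^sup>L \<mu> \<phi> + integral\<^sup>L \<nu> \<psi>)\<bar> \<le> 0" by (rule field_le_epsilon)
      then have "x h = integral\<^sup>L \<mu> \<phi> + integral\<^sup>L \<nu> \<psi>" by simp
      then show "fa_integral \<gamma> (\<lambda>(x, y). \<phi> x + \<psi> y) = integral\<^sup>L \<mu> \<phi> + integral\<^sup>L \<nu> \<psi>"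
        using g(2) hC unfolding h_def by simp
    qed
    moreover have "Tm \<gamma> = x"
    proof (rule ext)
      fix f
      have xt: "x \<in> topspace (powertop_real Cb)" using x by (rule in_closure_of[THEN iffD1, THEN conjunct1])
      show "Tm \<gamma> f = x f"
      proof (cases "f \<in> Cb")
        case True then show ?thesis using g(2) unfolding Tm_def by simp
      next
        case False
        then have "x f = undefined" using xt by (simp add: PiE_def extensional_def)
        then show ?thesis using False unfolding Tm_def by simp
      qed
    qed
    ultimately show "x \<in> Tm ` plans \<mu> \<nu>" by blast
  qed
  moreover have "Tm ` plans \<mu> \<nu> \<subseteq> topspace (powertop_real Cb)" using Tm_topspace by blast
  ultimately show ?thesis using closure_of_subset_eq by blast
qed

definition bnd :: "('z \<Rightarrow> real) \<Rightarrow> real" where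
  "bnd f = (SOME B. \<forall>x. \<bar>f x\<bar> \<le> B)"

lemma bnd: "f \<in> Cb \<Longrightarrow> \<forall>x. \<bar>f x\<bar> \<le> bnd f"
  unfolding bnd_def using Cb_bound[of f] by (rule someI_ex) simp

lemma Tm_box: "fa \<gamma> \<Longrightarrow> Tm \<gamma> \<in> PiE Cb (\<lambda>f. {- bnd f..bnd f})"
proof -
  assume g: "fa \<gamma>"
  have "- bnd f \<le> fa_integral \<gamma> f \<and> fa_integral \<gamma> f \<le> bnd f" if "f \<in> Cb" for f
    using int_bound[OF g bnd[OF that]] by linarith
  then show ?thesis unfolding Tm_def by auto
qed

lemma box_compact: "compactin (powertop_real Cb) (PiE Cb (\<lambda>f. {- bnd f..bnd f}))"
  by (simp add: compactin_PiE)

lemma plans_compact_img: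
  fixes \<mu> :: "'a::topological_space measure" and \<nu> :: "'b::topological_space measure"
  shows "compactin (powertop_real Cb) (Tm ` plans \<mu> \<nu>)"
proof (rule closed_compactin[OF box_compact _ plans_closed])
  show "Tm ` plans \<mu> \<nu> \<subseteq> PiE Cb (\<lambda>f. {- bnd f..bnd f})"
    using Tm_box plans_M1 M1_fa by blast
qed

lemma plans_compact:
  fixes \<mu> :: "'a::topological_space measure" and \<nu> :: "'b::topological_space measure"
  shows "compactin weak_top (plans \<mu> \<nu>)"
  unfolding weak_top_Tm by (rule compactin_pullback[OF plans_M1 plans_compact_img])


lemma M1_comb:
  fixes \<gamma>1 \<gamma>2 :: "'z::topological_space set \<Rightarrow> real"
  assumes g1: "\<gamma>1 \<in> M1" and g2: "\<gamma>2 \<in> M1" and t: "0 \<le> t" "t \<le> 1"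
  shows "(\<lambda>A. t * \<gamma>1 A + (1 - t) * \<gamma>2 A) \<in> M1"
proof -
  have f: "fa (\<lambda>A. t * \<gamma>1 A + (1 - t) * \<gamma>2 A)" by (rule fa_comb[OF M1_fa[OF g1] M1_fa[OF g2] t])
  have out: "\<forall>A. A \<notin> zs_algebra \<longrightarrow> t * \<gamma>1 A + (1 - t) * \<gamma>2 A = 0"
    using g1 g2 unfolding M1_def by simp
  have reg: "\<forall>A\<in>zs_algebra. \<forall>\<epsilon>>0. \<exists>F\<in>zero_sets. F \<subseteq> A \<and> t * \<gamma>1 (A - F) + (1 - t) * \<gamma>2 (A - F) < \<epsilon>"
  proof (intro ballI allI impI)
    fix A :: "'z set" and \<epsilon> :: real assume A: "A \<in> zs_algebra" and e: "0 < \<epsilon>"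
    obtain F1 where F1: "F1 \<in> zero_sets" "F1 \<subseteq> A" "\<gamma>1 (A - F1) < \<epsilon>" using g1 A e unfolding M1_def by blast
    obtain F2 where F2: "F2 \<in> zero_sets" "F2 \<subseteq> A" "\<gamma>2 (A - F2) < \<epsilon>" using g2 A e unfolding M1_def by blast
    define F where "F = F1 \<union> F2"
    have Fz: "F \<in> zero_sets" unfolding F_def by (rule zero_sets_Un[OF F1(1) F2(1)])
    have AF: "A - F \<in> zs_algebra" by (rule zs_Diff[OF A zs_zero[OF Fz]])
    have a1: "\<gamma>1 (A - F) \<le> \<gamma>1 (A - F1)"
      by (rule fa_mono[OF M1_fa[OF g1] zs_Diff[OF A zs_zero[OF F1(1)]] AF]) (auto simp: F_def)
    have a2: "\<gamma>2 (A - F) \<le> \<gamma>2 (A - F2)"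
      by (rule fa_mono[OF M1_fa[OF g2] zs_Diff[OF A zs_zero[OF F2(1)]] AF]) (auto simp: F_def)
    define c where "c = max (\<gamma>1 (A - F)) (\<gamma>2 (A - F))"
    have "c < \<epsilon>" unfolding c_def using a1 a2 F1(3) F2(3) by linarith
    moreover have "t * \<gamma>1 (A - F) \<le> t * c" unfolding c_def using t by (intro mult_left_mono) auto
    moreover have "(1 - t) * \<gamma>2 (A - F) \<le> (1 - t) * c" unfolding c_def using t by (intro mult_left_mono) auto
    ultimately have "t * \<gamma>1 (A - F) + (1 - t) * \<gamma>2 (A - F) < \<epsilon>" by (simp add: algebra_simps)
    moreover have "F \<subseteq> A" unfolding F_def using F1 F2 by blast
    ultimately show "\<exists>F\<in>zero_sets. F \<subseteq> A \<and> t * \<gamma>1 (A - F) + (1 - t) * \<gamma>2 (A - F) < \<epsilon>" using Fz by blast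
  qed
  show ?thesis unfolding M1_def using f out reg unfolding fa_def by blast
qed

lemma plans_convex:
  fixes \<mu> :: "'a::topological_space measure" and \<nu> :: "'b::topological_space measure"
  assumes g1: "\<gamma>1 \<in> plans \<mu> \<nu>" and g2: "\<gamma>2 \<in> plans \<mu> \<nu>" and t: "0 \<le> t" "t \<le> 1"
  shows "(\<lambda>A. t * \<gamma>1 A + (1 - t) * \<gamma>2 A) \<in> plans \<mu> \<nu>"
  unfolding plans_def
proof (intro CollectI conjI ballI)
  have m1: "\<gamma>1 \<in> M1" and m2: "\<gamma>2 \<in> M1" using g1 g2 plans_M1 by blast+
  show "(\<lambda>A. t * \<gamma>1 A + (1 - t) * \<gamma>2 A) \<in> M1" by (rule M1_comb[OF m1 m2 t])
  fix \<phi> :: "'a \<Rightarrow> real" and \<psi> :: "'b \<Rightarrow> real" assume p: "\<phi> \<in> Cb" and q: "\<psi> \<in> Cb"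
  have "fa_integral (\<lambda>A. t * \<gamma>1 A + (1 - t) * \<gamma>2 A) (\<lambda>(x, y). \<phi> x + \<psi> y)
      = t * fa_integral \<gamma>1 (\<lambda>(x, y). \<phi> x + \<psi> y) + (1 - t) * fa_integral \<gamma>2 (\<lambda>(x, y). \<phi> x + \<psi> y)"
    by (rule int_comb[OF M1_fa[OF m1] M1_fa[OF m2] t oplus_Cb[OF p q]])
  also have "\<dots> = t * (integral\<^sup>L \<mu> \<phi> + integral\<^sup>L \<nu> \<psi>) + (1 - t) * (integral\<^sup>L \<mu> \<phi> + integral\<^sup>L \<nu> \<psi>)"
    using g1 g2 p q unfolding plans_def by simp
  also have "\<dots> = integral\<^sup>L \<mu> \<phi> + integral\<^sup>L \<nu> \<psi>" by (simp add: algebra_simps)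
  finally show "fa_integral (\<lambda>A. t * \<gamma>1 A + (1 - t) * \<gamma>2 A) (\<lambda>(x, y). \<phi> x + \<psi> y) = integral\<^sup>L \<mu> \<phi> + integral\<^sup>L \<nu> \<psi>" .
qed


lemma max_minorant:
  fixes c :: "'z::topological_space \<Rightarrow> ereal"
  assumes "finite S" "S \<subseteq> {f\<in>Cb. \<forall>z. ereal (f z) \<le> c z}" and b: "\<forall>z. ereal b \<le> c z"
  shows "\<exists>g\<in>{f\<in>Cb. \<forall>z. ereal (f z) \<le> c z}. \<forall>f\<in>S. \<forall>z. f z \<le> g z"
  using assms(1,2)
proof (induction S rule: finite_induct)
  case empty
  show ?case using b by (intro bexI[of _ "\<lambda>z. b"]) auto
next
  case (insert h S)
  obtain g where g: "g \<in> Cb" "\<forall>z. ereal (g z) \<le> c z" "\<forall>f\<in>S. \<forall>z. f z \<le> g z" using insert by auto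
  have h: "h \<in> Cb" "\<forall>z. ereal (h z) \<le> c z" using insert.prems by auto
  have "(\<lambda>z. max (h z) (g z)) \<in> Cb" by (rule Cb_max[OF h(1) g(1)])
  moreover have "\<forall>z. ereal (max (h z) (g z)) \<le> c z" using g(2) h(2) by (simp add: max_def)
  moreover have "\<forall>f\<in>insert h S. \<forall>z. f z \<le> max (h z) (g z)" using g(3) by (auto simp: le_max_iff_disj)
  ultimately show ?case by (intro bexI[of _ "\<lambda>z. max (h z) (g z)"]) simp_all
qed

lemma minimizer:
  fixes \<mu> :: "'a::topological_space measure" and \<nu> :: "'b::topological_space measure"
    and c :: "'a \<times> 'b \<Rightarrow> ereal"
  assumes c: "c \<in> lsc_bi" and v: "v_min \<mu> \<nu> c < \<infinity>"
  shows "plans \<mu> \<nu> \<noteq> {} \<and> (\<exists>\<gamma>\<in>plans \<mu> \<nu>. lsc_integral \<gamma> c = v_min \<mu> \<nu> c)"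
proof -
  define P where "P = plans \<mu> \<nu>"
  define Am where "Am = {f\<in>Cb. \<forall>z. ereal (f z) \<le> c z}"
  have lscI: "lsc_integral \<gamma> c = (SUP f\<in>Am. ereal (fa_integral \<gamma> f))" for \<gamma>
    unfolding lsc_integral_def Am_def ..
  have vI: "v_min \<mu> \<nu> c = (INF \<gamma>\<in>P. lsc_integral \<gamma> c)" unfolding v_min_def P_def ..
  obtain b :: real where b: "\<forall>z. ereal b \<le> c z" using c unfolding lsc_bi_def by blast
  have bA: "(\<lambda>z. b) \<in> Am" unfolding Am_def using b by simp
  have Pne: "P \<noteq> {}"
  proof
    assume "P = {}"
    then have "v_min \<mu> \<nu> c = \<infinity>" unfolding vI by (simp add: top_ereal_def)
    then show False using v by simp
  qed
  have lb: "ereal b \<le> lsc_integral \<gamma> c" if "\<gamma> \<in> P" for \<gamma>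
  proof -
    have "fa_integral \<gamma> (\<lambda>z. b) = b" using int_const[OF M1_fa] that plans_M1 unfolding P_def by blast
    then show ?thesis unfolding lscI using bA by (metis SUP_upper)
  qed
  have "ereal b \<le> v_min \<mu> \<nu> c" unfolding vI by (rule INF_greatest) (rule lb)
  then obtain r where r: "v_min \<mu> \<nu> c = ereal r" using v by (cases "v_min \<mu> \<nu> c") auto
  define C where "C f e = {y \<in> topspace (powertop_real Cb). y f \<in> {..r + e}}" for f :: "'a \<times> 'b \<Rightarrow> real" and e
  define \<U> where "\<U> = (\<lambda>(f, e). C f e) ` (Am \<times> {0<..})"
  define K where "K = Tm ` P"
  have Kc: "compactin (powertop_real Cb) K" unfolding K_def P_def by (rule plans_compact_img)
  have closedU: "\<forall>U\<in>\<U>. closedin (powertop_real Cb) U"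
  proof
    fix U assume "U \<in> \<U>"
    then obtain p where p: "p \<in> Am \<times> {0<..}" "U = (\<lambda>(f, e). C f e) p" unfolding \<U>_def by blast
    obtain f e where "p = (f, e)" by (cases p)
    then have fe: "f \<in> Am" "U = C f e" using p by auto
    have "continuous_map (powertop_real Cb) euclideanreal (\<lambda>y. y f)"
      using fe(1) unfolding Am_def by (intro continuous_map_product_projection) auto
    then show "closedin (powertop_real Cb) U" unfolding fe C_def
      by (rule closedin_continuous_map_preimage) simp
  qed
  have fip: "\<forall>\<F>. finite \<F> \<and> \<F> \<subseteq> \<U> \<longrightarrow> K \<inter> \<Inter>\<F> \<noteq> {}"
  proof (intro allI impI)
    fix \<F> assume F: "finite \<F> \<and> \<F> \<subseteq> \<U>"
    obtain S where S: "S \<subseteq> Am \<times> {0<..}" "finite S" "\<F> = (\<lambda>(f, e). C f e) ` S"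
      using finite_subset_image[of \<F> "\<lambda>(f, e). C f e" "Am \<times> {0<..}"] F unfolding \<U>_def by blast
    have fS: "fst ` S \<subseteq> Am" using S(1) by auto
    have finS: "finite (fst ` S)" using S(2) by simp
    obtain g where g: "g \<in> Am" "\<forall>f\<in>fst ` S. \<forall>z. f z \<le> g z"
      using max_minorant[OF finS fS[unfolded Am_def] b] unfolding Am_def by blast
    define e0 where "e0 = Min (insert 1 (snd ` S))"
    have e0: "0 < e0" unfolding e0_def using S by (subst Min_gr_iff) auto
    have e0le: "e0 \<le> e" if "(f, e) \<in> S" for f e unfolding e0_def using S(2) that by (intro Min_le) force+
    have "v_min \<mu> \<nu> c < ereal (r + e0)" using r e0 by simp
    then obtain \<gamma> where g1: "\<gamma> \<in> P" "lsc_integral \<gamma> c < ereal (r + e0)"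
      unfolding vI by (auto simp: INF_less_iff)
    have "ereal (fa_integral \<gamma> g) \<le> lsc_integral \<gamma> c" unfolding lscI using g(1) by (rule SUP_upper)
    then have "ereal (fa_integral \<gamma> g) < ereal (r + e0)" using g1(2) by (rule le_less_trans)
    then have Ig: "fa_integral \<gamma> g < r + e0" by simp
    have faG: "fa \<gamma>" using g1(1) plans_M1 M1_fa unfolding P_def by blast
    have gC: "g \<in> Cb" using g(1) unfolding Am_def by blast
    have "Tm \<gamma> \<in> \<Inter>\<F>"
    proof
      fix U assume "U \<in> \<F>"
      then obtain p where p: "p \<in> S" "U = (\<lambda>(f, e). C f e) p" using S(3) by blast
      obtain f e where "p = (f, e)" by (cases p)
      then have fe: "(f, e) \<in> S" "U = C f e" using p by auto
      have fC: "f \<in> Cb" using fe S(1) unfolding Am_def by blast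
      have "fa_integral \<gamma> f \<le> fa_integral \<gamma> g"
        by (rule int_mono[OF faG fC gC]) (use g(2) fe(1) in force)
      then have "fa_integral \<gamma> f \<le> r + e" using Ig e0le[OF fe(1)] by linarith
      then show "Tm \<gamma> \<in> U" unfolding fe C_def using Tm_topspace fC by (simp add: Tm_def)
    qed
    moreover have "Tm \<gamma> \<in> K" unfolding K_def using g1(1) by blast
    ultimately show "K \<inter> \<Inter>\<F> \<noteq> {}" by blast
  qed
  have "K \<inter> \<Inter>\<U> \<noteq> {}" using Kc closedU fip unfolding compactin_fip by blast
  then obtain y where y: "y \<in> K" "y \<in> \<Inter>\<U>" by blast
  then obtain \<gamma> where gs: "\<gamma> \<in> P" "y = Tm \<gamma>" unfolding K_def by blast
  have "fa_integral \<gamma> f \<le> r" if f: "f \<in> Am" for f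
  proof (rule field_le_epsilon)
    fix e :: real assume e: "0 < e"
    have "C f e \<in> \<U>" unfolding \<U>_def using f e by force
    then have "y \<in> C f e" using y(2) by blast
    moreover have "f \<in> Cb" using f unfolding Am_def by blast
    ultimately show "fa_integral \<gamma> f \<le> r + e" unfolding C_def gs(2) Tm_def by simp
  qed
  then have "lsc_integral \<gamma> c \<le> ereal r" unfolding lscI by (intro SUP_least) simp
  moreover have "v_min \<mu> \<nu> c \<le> lsc_integral \<gamma> c" unfolding vI using gs(1) by (rule INF_lower)
  ultimately have "lsc_integral \<gamma> c = v_min \<mu> \<nu> c" using r by simp
  then show ?thesis using gs(1) Pne unfolding P_def by blast
qed


theorem mainTheorem5:
  fixes \<mu> :: "'a::t2_space measure" and \<nu> :: "'b::t2_space measure"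
    and c :: "'a \<times> 'b \<Rightarrow> ereal"
  assumes "completely_regular_space (euclidean :: 'a topology)"
    and "completely_regular_space (euclidean :: 'b topology)"
    and "baire_prob \<mu>" and "baire_prob \<nu>"
    and "c \<in> lsc_bi"
    and "v_min \<mu> \<nu> c < \<infinity>"
  shows "plans \<mu> \<nu> \<noteq> {}
    \<and> (\<forall>\<gamma>1\<in>plans \<mu> \<nu>. \<forall>\<gamma>2\<in>plans \<mu> \<nu>. \<forall>t::real. 0 \<le> t \<and> t \<le> 1 \<longrightarrow>
          (\<lambda>A. t * \<gamma>1 A + (1 - t) * \<gamma>2 A) \<in> plans \<mu> \<nu>)
    \<and> compactin weak_top (plans \<mu> \<nu>)
    \<and> (\<exists>\<gamma>\<in>plans \<mu> \<nu>. lsc_integral \<gamma> c = v_min \<mu> \<nu> c)"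
  using minimizer[OF assms(5,6)] plans_convex[of _ \<mu> \<nu>] plans_compact[of \<mu> \<nu>] by blast

end
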